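(* Let $a\in[0,1)$, let $\{v_n\}_{n=1}^\infty\subset\mathbb{C}$ and $V=\mathrm{diag}(v_1,v_2,\dots)$. Let $K'$ be the semi-infinite matrix with entries $K'_{m,n}:=\sqrt{|v_m|}\big[\frac{a}{1-a}+\min(m,n)\big]\sqrt{|v_n|}$, $m,n\in\mathbb{N}$. If $K'$, regarded as an operator on $\ell^2(\mathbb{N})$, satisfies $\|K'\|\le1$, then $\sigma_{\mathrm d}(J_a+V)=\emptyset$. Equivalently (the two conditions being equivalent), if $|V|\le-\Delta_a$ in the sense of quadratic forms, then $\sigma_{\mathrm d}(J_a+V)=\emptyset$.
   Context: $\mathbb{N}=\{1,2,\dots\}$. For $a\in\mathbb{C}$, $J_a$ is the operator on $\ell^2(\mathbb{N})$ with $(J_a\psi)_1=a\psi_1+\psi_2$ and $(J_a\psi)_n=\psi_{n-1}+\psi_{n+1}$ for $n\ge2$; $-\Delta_a:=2-J_a$; $|V|=\mathrm{diag}(|v_1|,|v_2|,\dots)$. $\sigma_{\mathrm d}$ denotes the discrete spectrum (isolated eigenvalues of finite algebraic multiplicity). *)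

theory Defs
  imports "HOL-Analysis.Analysis"
begin

text \<open>Convention: the index set N = {1,2,...} of the paper is represented by the
  Isabelle type nat = {0,1,...} via the shift n \<mapsto> n+1; i.e. a sequence
  psi :: nat \<Rightarrow> complex stores psi_{n+1} at position n.\<close>

definition l2 :: "(nat \<Rightarrow> complex) \<Rightarrow> bool" where
  "l2 \<psi> \<longleftrightarrow> summable (\<lambda>n. (cmod (\<psi> n))\<^sup>2)"

definition l2norm :: "(nat \<Rightarrow> complex) \<Rightarrow> real" where
  "l2norm \<psi> = sqrt (\<Sum>n. (cmod (\<psi> n))\<^sup>2)"

definition l2inner :: "(nat \<Rightarrow> complex) \<Rightarrow> (nat \<Rightarrow> complex) \<Rightarrow> complex" where
  "l2inner \<phi> \<psi> = (\<Sum>n. cnj (\<phi> n) * \<psi> n)"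

definition Jop :: "complex \<Rightarrow> (nat \<Rightarrow> complex) \<Rightarrow> nat \<Rightarrow> complex" where
  "Jop a \<psi> n = (if n = 0 then a * \<psi> 0 + \<psi> 1 else \<psi> (n - 1) + \<psi> (n + 1))"

definition negLap :: "complex \<Rightarrow> (nat \<Rightarrow> complex) \<Rightarrow> nat \<Rightarrow> complex" where
  "negLap a \<psi> n = 2 * \<psi> n - Jop a \<psi> n"

definition Hdom :: "complex \<Rightarrow> (nat \<Rightarrow> complex) \<Rightarrow> (nat \<Rightarrow> complex) set" where
  "Hdom a v = {\<psi>. l2 \<psi> \<and> l2 (\<lambda>n. v n * \<psi> n)}"

definition Hop :: "complex \<Rightarrow> (nat \<Rightarrow> complex) \<Rightarrow> (nat \<Rightarrow> complex) \<Rightarrow> nat \<Rightarrow> complex" where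
  "Hop a v \<psi> n = Jop a \<psi> n + v n * \<psi> n"

definition resolvent_set :: "complex \<Rightarrow> (nat \<Rightarrow> complex) \<Rightarrow> complex set" where
  "resolvent_set a v = {z. (\<forall>f. l2 f \<longrightarrow> (\<exists>!\<psi>. \<psi> \<in> Hdom a v \<and> (\<lambda>n. Hop a v \<psi> n - z * \<psi> n) = f))
      \<and> (\<exists>C. \<forall>\<psi>\<in>Hdom a v. l2norm \<psi> \<le> C * l2norm (\<lambda>n. Hop a v \<psi> n - z * \<psi> n))}"

definition spectrum_H :: "complex \<Rightarrow> (nat \<Rightarrow> complex) \<Rightarrow> complex set" where
  "spectrum_H a v = - resolvent_set a v"

definition is_eigenvalue :: "complex \<Rightarrow> (nat \<Rightarrow> complex) \<Rightarrow> complex \<Rightarrow> bool" where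
  "is_eigenvalue a v z \<longleftrightarrow> (\<exists>\<psi>\<in>Hdom a v. \<psi> \<noteq> (\<lambda>_. 0) \<and> Hop a v \<psi> = (\<lambda>n. z * \<psi> n))"

text \<open>gen_ker a v z k psi: psi \<in> ker (H - z)^k (with domains of the iterates respected).\<close>
fun gen_ker :: "complex \<Rightarrow> (nat \<Rightarrow> complex) \<Rightarrow> complex \<Rightarrow> nat \<Rightarrow> (nat \<Rightarrow> complex) \<Rightarrow> bool" where
  "gen_ker a v z 0 \<psi> = (\<psi> = (\<lambda>_. 0))"
| "gen_ker a v z (Suc k) \<psi> = (\<psi> \<in> Hdom a v \<and> gen_ker a v z k (\<lambda>n. Hop a v \<psi> n - z * \<psi> n))"

text \<open>Finite algebraic multiplicity: the generalized eigenspace (union over k of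
  ker (H - z)^k) is finite-dimensional, i.e. spanned by a finite set.\<close>
definition finite_alg_mult :: "complex \<Rightarrow> (nat \<Rightarrow> complex) \<Rightarrow> complex \<Rightarrow> bool" where
  "finite_alg_mult a v z \<longleftrightarrow> (\<exists>B. finite B \<and>
     (\<forall>\<psi>. (\<exists>k. gen_ker a v z k \<psi>) \<longrightarrow> (\<exists>c. \<psi> = (\<lambda>n. \<Sum>b\<in>B. c b * b n))))"

definition discrete_spectrum :: "complex \<Rightarrow> (nat \<Rightarrow> complex) \<Rightarrow> complex set" where
  "discrete_spectrum a v = {z. z \<in> spectrum_H a v \<and> \<not> z islimpt spectrum_H a v
      \<and> is_eigenvalue a v z \<and> finite_alg_mult a v z}"

text \<open>The matrix K' (0-based): K'_{m,n} = sqrt|v_m| (a/(1-a) + min(m,n)) sqrt|v_n|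
  in 1-based indices, i.e. min m n + 1 in 0-based indices.\<close>
definition Kmat :: "real \<Rightarrow> (nat \<Rightarrow> complex) \<Rightarrow> nat \<Rightarrow> nat \<Rightarrow> complex" where
  "Kmat a v m n = complex_of_real
     (sqrt (cmod (v m)) * (a / (1 - a) + real (min m n + 1)) * sqrt (cmod (v n)))"

definition matrix_op_norm_le :: "(nat \<Rightarrow> nat \<Rightarrow> complex) \<Rightarrow> real \<Rightarrow> bool" where
  "matrix_op_norm_le M c \<longleftrightarrow> (\<forall>\<psi>. l2 \<psi> \<longrightarrow>
     (\<forall>m. summable (\<lambda>n. M m n * \<psi> n)) \<and>
     l2 (\<lambda>m. \<Sum>n. M m n * \<psi> n) \<and>
     l2norm (\<lambda>m. \<Sum>n. M m n * \<psi> n) \<le> c * l2norm \<psi>)"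

definition absV_le_negLap :: "complex \<Rightarrow> (nat \<Rightarrow> complex) \<Rightarrow> bool" where
  "absV_le_negLap a v \<longleftrightarrow> (\<forall>\<psi>. l2 \<psi> \<longrightarrow>
     summable (\<lambda>n. cmod (v n) * (cmod (\<psi> n))\<^sup>2) \<and>
     (\<Sum>n. cmod (v n) * (cmod (\<psi> n))\<^sup>2) \<le> Re (l2inner \<psi> (negLap a \<psi>)))"

end

theory Submission
  imports Defs
begin


lemma summable_sq_mult:
  fixes x y :: "nat \<Rightarrow> real"
  assumes "summable (\<lambda>n. (x n)\<^sup>2)" "summable (\<lambda>n. (y n)\<^sup>2)"
  shows "summable (\<lambda>n. \<bar>x n\<bar> * \<bar>y n\<bar>)" "summable (\<lambda>n. x n * y n)"
proof -
  have b: "norm (\<bar>x n\<bar> * \<bar>y n\<bar>) \<le> ((x n)\<^sup>2 + (y n)\<^sup>2) / 2" for n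
    using sum_squares_bound[of "\<bar>x n\<bar>" "\<bar>y n\<bar>"]
    by (simp add: abs_mult)
  have s: "summable (\<lambda>n. ((x n)\<^sup>2 + (y n)\<^sup>2) / 2)"
    using assms by (intro summable_divide summable_add)
  show "summable (\<lambda>n. \<bar>x n\<bar> * \<bar>y n\<bar>)"
    by (rule summable_comparison_test'[OF s b])
  show "summable (\<lambda>n. x n * y n)"
    by (rule summable_comparison_test'[OF s]) (use b in \<open>simp add: abs_mult\<close>)
qed

lemma CS_series:
  fixes x y :: "nat \<Rightarrow> real"
  assumes "summable (\<lambda>n. (x n)\<^sup>2)" "summable (\<lambda>n. (y n)\<^sup>2)"
  shows "\<bar>\<Sum>n. x n * y n\<bar> \<le> sqrt (\<Sum>n. (x n)\<^sup>2) * sqrt (\<Sum>n. (y n)\<^sup>2)"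
proof -
  note s = summable_sq_mult[OF assms]
  have "(\<Sum>n. \<bar>x n\<bar> * \<bar>y n\<bar>) \<le> sqrt (\<Sum>n. (x n)\<^sup>2) * sqrt (\<Sum>n. (y n)\<^sup>2)"
  proof (rule suminf_le_const[OF s(1)])
    fix N
    have "(\<Sum>n<N. \<bar>x n\<bar> * \<bar>y n\<bar>) \<le> L2_set x {..<N} * L2_set y {..<N}"
      by (rule L2_set_mult_ineq)
    also have "\<dots> \<le> sqrt (\<Sum>n. (x n)\<^sup>2) * sqrt (\<Sum>n. (y n)\<^sup>2)"
    proof -
      have "(\<Sum>i<N. (x i)\<^sup>2) \<le> (\<Sum>n. (x n)\<^sup>2)" by (rule sum_le_suminf[OF assms(1)]) auto
      moreover have "(\<Sum>i<N. (y i)\<^sup>2) \<le> (\<Sum>n. (y n)\<^sup>2)" by (rule sum_le_suminf[OF assms(2)]) auto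
      moreover have "0 \<le> (\<Sum>n. (x n)\<^sup>2)" "0 \<le> (\<Sum>i<N. (y i)\<^sup>2)"
        using assms by (simp_all add: suminf_nonneg sum_nonneg)
      ultimately show ?thesis unfolding L2_set_def
        by (intro mult_mono[OF real_sqrt_le_mono real_sqrt_le_mono]) simp_all
    qed
    finally show "(\<Sum>n<N. \<bar>x n\<bar> * \<bar>y n\<bar>) \<le> sqrt (\<Sum>n. (x n)\<^sup>2) * sqrt (\<Sum>n. (y n)\<^sup>2)" .
  qed
  moreover have "\<bar>\<Sum>n. x n * y n\<bar> \<le> (\<Sum>n. \<bar>x n\<bar> * \<bar>y n\<bar>)"
    using summable_rabs[of "\<lambda>n. x n * y n"] s(1) by (simp add: abs_mult)
  ultimately show ?thesis by linarith
qed

lemma l2_summable_cmod: "l2 \<psi> \<Longrightarrow> summable (\<lambda>n. (cmod (\<psi> n))\<^sup>2)"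
  by (simp add: l2_def)

lemma summable_shift_pred:
  fixes f :: "nat \<Rightarrow> real"
  assumes "summable f" shows "summable (\<lambda>n. f (n - 1))"
proof -
  have "summable (\<lambda>n. f (Suc n - 1))" using assms by simp
  then show ?thesis by (subst summable_Suc_iff[symmetric])
qed

lemma summable_shift_suc:
  fixes f :: "nat \<Rightarrow> real"
  assumes "summable f" shows "summable (\<lambda>n. f (Suc n))"
  using assms by (simp add: summable_Suc_iff)

lemma negLap_bound:
  "cmod (negLap (complex_of_real a) \<psi> n) \<le> (2 + \<bar>a\<bar>) * cmod (\<psi> n) + cmod (\<psi> (n - 1)) + cmod (\<psi> (Suc n))"
proof (cases "n = 0")
  case True
  then show ?thesis unfolding negLap_def Jop_def
    using norm_triangle_ineq4[of "2 * \<psi> 0" "complex_of_real a * \<psi> 0 + \<psi> 1"]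
          norm_triangle_ineq[of "complex_of_real a * \<psi> 0" "\<psi> 1"]
    apply (simp add: norm_mult algebra_simps) using norm_ge_zero[of "\<psi> 0"] by linarith
next
  case False
  then show ?thesis unfolding negLap_def Jop_def
    using norm_triangle_ineq4[of "2 * \<psi> n" "\<psi> (n - 1) + \<psi> (n + 1)"]
          norm_triangle_ineq[of "\<psi> (n - 1)" "\<psi> (n + 1)"]
    apply (simp add: norm_mult algebra_simps)
    using mult_nonneg_nonneg[OF abs_ge_zero[of a] norm_ge_zero[of "\<psi> n"]] by linarith
qed

lemma summable_inner_negLap:
  assumes "l2 \<psi>"
  shows "summable (\<lambda>n. cnj (\<psi> n) * negLap (complex_of_real a) \<psi> n)"
proof -
  let ?p = "\<lambda>n. cmod (\<psi> n)"
  have s0: "summable (\<lambda>n. (?p n)\<^sup>2)" using assms by (simp add: l2_def)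
  have s1: "summable (\<lambda>n. (?p (n - 1))\<^sup>2)" by (rule summable_shift_pred[OF s0])
  have s2: "summable (\<lambda>n. (?p (Suc n))\<^sup>2)" by (rule summable_shift_suc[OF s0])
  have m1: "summable (\<lambda>n. \<bar>?p n\<bar> * \<bar>?p (n - 1)\<bar>)" using summable_sq_mult(1)[OF s0 s1] .
  have m2: "summable (\<lambda>n. \<bar>?p n\<bar> * \<bar>?p (Suc n)\<bar>)" using summable_sq_mult(1)[OF s0 s2] .
  have g: "summable (\<lambda>n. (2 + \<bar>a\<bar>) * (?p n)\<^sup>2 + \<bar>?p n\<bar> * \<bar>?p (n - 1)\<bar> + \<bar>?p n\<bar> * \<bar>?p (Suc n)\<bar>)"
    by (intro summable_add summable_mult s0 m1 m2)
  show ?thesis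
  proof (rule summable_comparison_test'[OF g])
    fix n
    have "cmod (cnj (\<psi> n) * negLap (complex_of_real a) \<psi> n) = ?p n * cmod (negLap (complex_of_real a) \<psi> n)"
      by (simp add: norm_mult)
    also have "\<dots> \<le> ?p n * ((2 + \<bar>a\<bar>) * ?p n + ?p (n - 1) + ?p (Suc n))"
      by (intro mult_left_mono negLap_bound) auto
    finally show "norm (cnj (\<psi> n) * negLap (complex_of_real a) \<psi> n) \<le> (2 + \<bar>a\<bar>) * (?p n)\<^sup>2 + \<bar>?p n\<bar> * \<bar>?p (n - 1)\<bar> + \<bar>?p n\<bar> * \<bar>?p (Suc n)\<bar>"
      by (simp add: power2_eq_square algebra_simps)
  qed
qed

lemma cmod_sq_prod: "cmod z * cmod z = Re z * Re z + Im z * Im z"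
  using cmod_power2[of z] by (simp add: power2_eq_square)

definition Qf :: "real \<Rightarrow> (nat \<Rightarrow> complex) \<Rightarrow> real" where
  "Qf a \<psi> = (1 - a) * (cmod (\<psi> 0))\<^sup>2 + (\<Sum>n. (cmod (\<psi> n - \<psi> (Suc n)))\<^sup>2)"

lemma partial_Q:
  "Re (\<Sum>n<Suc N. cnj (\<psi> n) * negLap (complex_of_real a) \<psi> n)
   = (1 - a) * (cmod (\<psi> 0))\<^sup>2 + (\<Sum>n<N. (cmod (\<psi> n - \<psi> (Suc n)))\<^sup>2)
     + (cmod (\<psi> N))\<^sup>2 - Re (cnj (\<psi> N) * \<psi> (Suc N))"
proof (induction N)
  case 0
  then show ?case
    by (simp add: negLap_def Jop_def cmod_power2 power2_eq_square cmod_sq_prod algebra_simps)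
next
  case (Suc N)
  have "Re (\<Sum>n<Suc (Suc N). cnj (\<psi> n) * negLap (complex_of_real a) \<psi> n)
     = Re (\<Sum>n<Suc N. cnj (\<psi> n) * negLap (complex_of_real a) \<psi> n)
       + Re (cnj (\<psi> (Suc N)) * negLap (complex_of_real a) \<psi> (Suc N))"
    by simp
  also have "\<dots> = (1 - a) * (cmod (\<psi> 0))\<^sup>2 + (\<Sum>n<N. (cmod (\<psi> n - \<psi> (Suc n)))\<^sup>2)
     + (cmod (\<psi> N))\<^sup>2 - Re (cnj (\<psi> N) * \<psi> (Suc N))
     + Re (cnj (\<psi> (Suc N)) * negLap (complex_of_real a) \<psi> (Suc N))"
    using Suc by simp
  also have "\<dots> = (1 - a) * (cmod (\<psi> 0))\<^sup>2 + (\<Sum>n<Suc N. (cmod (\<psi> n - \<psi> (Suc n)))\<^sup>2)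
     + (cmod (\<psi> (Suc N)))\<^sup>2 - Re (cnj (\<psi> (Suc N)) * \<psi> (Suc (Suc N)))"
    by (simp add: negLap_def Jop_def cmod_power2 power2_eq_square cmod_sq_prod algebra_simps)
  finally show ?case .
qed

lemma l2_tendsto_zero:
  assumes "l2 \<psi>" shows "\<psi> \<longlonglongrightarrow> 0"
proof -
  have "(\<lambda>n. (cmod (\<psi> n))\<^sup>2) \<longlonglongrightarrow> 0"
    by (rule summable_LIMSEQ_zero) (use assms in \<open>simp add: l2_def\<close>)
  then have "(\<lambda>n. sqrt ((cmod (\<psi> n))\<^sup>2)) \<longlonglongrightarrow> sqrt 0"
    by (intro tendsto_real_sqrt)
  then have "(\<lambda>n. cmod (\<psi> n)) \<longlonglongrightarrow> 0" by simp
  then show ?thesis by (simp add: tendsto_norm_zero_iff)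
qed

lemma summable_diff_sq:
  assumes "l2 \<psi>"
  shows "summable (\<lambda>n. (cmod (\<psi> n - \<psi> (Suc n)))\<^sup>2)"
proof -
  have s0: "summable (\<lambda>n. (cmod (\<psi> n))\<^sup>2)" using assms by (simp add: l2_def)
  have s2: "summable (\<lambda>n. (cmod (\<psi> (Suc n)))\<^sup>2)" by (rule summable_shift_suc[OF s0])
  have g: "summable (\<lambda>n. 2 * (cmod (\<psi> n))\<^sup>2 + 2 * (cmod (\<psi> (Suc n)))\<^sup>2)"
    by (intro summable_add summable_mult s0 s2)
  show ?thesis
  proof (rule summable_comparison_test'[OF g])
    fix n
    have "cmod (\<psi> n - \<psi> (Suc n)) \<le> cmod (\<psi> n) + cmod (\<psi> (Suc n))" by (rule norm_triangle_ineq4)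
    then have "(cmod (\<psi> n - \<psi> (Suc n)))\<^sup>2 \<le> (cmod (\<psi> n) + cmod (\<psi> (Suc n)))\<^sup>2"
      by (intro power_mono) auto
    also have "\<dots> \<le> 2 * (cmod (\<psi> n))\<^sup>2 + 2 * (cmod (\<psi> (Suc n)))\<^sup>2"
      using power2_sum[of "cmod (\<psi> n)" "cmod (\<psi> (Suc n))"] power2_diff[of "cmod (\<psi> n)" "cmod (\<psi> (Suc n))"]
        zero_le_power2[of "cmod (\<psi> n) - cmod (\<psi> (Suc n))"] by linarith
    finally show "norm ((cmod (\<psi> n - \<psi> (Suc n)))\<^sup>2) \<le> 2 * (cmod (\<psi> n))\<^sup>2 + 2 * (cmod (\<psi> (Suc n)))\<^sup>2"
      by simp
  qed
qed

lemma Q_identity: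
  assumes "l2 \<psi>"
  shows "Re (l2inner \<psi> (negLap (complex_of_real a) \<psi>)) = Qf a \<psi>"
proof -
  let ?f = "\<lambda>n. cnj (\<psi> n) * negLap (complex_of_real a) \<psi> n"
  have sf: "summable ?f" by (rule summable_inner_negLap[OF assms])
  have sd: "summable (\<lambda>n. (cmod (\<psi> n - \<psi> (Suc n)))\<^sup>2)" by (rule summable_diff_sq[OF assms])
  have t0: "\<psi> \<longlonglongrightarrow> 0" by (rule l2_tendsto_zero[OF assms])
  have L1: "(\<lambda>N. Re (\<Sum>n<Suc N. ?f n)) \<longlonglongrightarrow> Re (suminf ?f)"
  proof -
    have "(\<lambda>N. \<Sum>n<Suc N. ?f n) \<longlonglongrightarrow> suminf ?f"
      using summable_LIMSEQ[OF sf] by (rule LIMSEQ_Suc)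
    then show ?thesis by (rule tendsto_Re)
  qed
  have L2: "(\<lambda>N. (1 - a) * (cmod (\<psi> 0))\<^sup>2 + (\<Sum>n<N. (cmod (\<psi> n - \<psi> (Suc n)))\<^sup>2)
     + (cmod (\<psi> N))\<^sup>2 - Re (cnj (\<psi> N) * \<psi> (Suc N))) \<longlonglongrightarrow>
     (1 - a) * (cmod (\<psi> 0))\<^sup>2 + (\<Sum>n. (cmod (\<psi> n - \<psi> (Suc n)))\<^sup>2) + (cmod 0)\<^sup>2 - Re (cnj 0 * 0)"
    apply (intro tendsto_intros summable_LIMSEQ[OF sd])
    using t0 apply (auto intro: tendsto_intros LIMSEQ_Suc)
    done
  have "Re (suminf ?f) = (1 - a) * (cmod (\<psi> 0))\<^sup>2 + (\<Sum>n. (cmod (\<psi> n - \<psi> (Suc n)))\<^sup>2)"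
    using LIMSEQ_unique[OF L1] L2 unfolding partial_Q by simp
  then show ?thesis by (simp add: l2inner_def Qf_def)
qed



definition cc :: "real \<Rightarrow> real" where "cc a = 1 / (1 - a)"
definition ww :: "(nat \<Rightarrow> complex) \<Rightarrow> nat \<Rightarrow> real" where "ww v n = sqrt (cmod (v n))"
definition kr :: "real \<Rightarrow> (nat \<Rightarrow> complex) \<Rightarrow> nat \<Rightarrow> nat \<Rightarrow> real" where
  "kr a v m n = ww v m * (cc a + real (min m n)) * ww v n"

lemma ww_nonneg: "0 \<le> ww v n" by (simp add: ww_def)
lemma ww_sq: "(ww v n)\<^sup>2 = cmod (v n)" by (simp add: ww_def)
lemma ww_sq': "ww v n * ww v n = cmod (v n)" by (simp add: ww_def)

lemma cc_pos: "a < 1 \<Longrightarrow> 0 < cc a" by (simp add: cc_def)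
lemma cc_inv: "a < 1 \<Longrightarrow> (1 - a) * cc a = 1" by (simp add: cc_def)

lemma Kmat_kr: assumes "a < 1" shows "Kmat a v m n = complex_of_real (kr a v m n)"
proof -
  have "a / (1 - a) + real (min m n + 1) = cc a + real (min m n)"
    using assms by (simp add: cc_def field_simps)
  then show ?thesis unfolding Kmat_def kr_def ww_def by (simp only:)
qed

lemma kr_sym: "kr a v m n = kr a v n m"
  by (simp add: kr_def min.commute mult.commute mult.left_commute)

definition SS :: "(nat \<Rightarrow> complex) \<Rightarrow> nat \<Rightarrow> (nat \<Rightarrow> real) \<Rightarrow> real" where
  "SS v N \<phi> = (\<Sum>n\<le>N. ww v n * \<phi> n)"
definition TT :: "(nat \<Rightarrow> complex) \<Rightarrow> nat \<Rightarrow> (nat \<Rightarrow> real) \<Rightarrow> nat \<Rightarrow> real" where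
  "TT v N \<phi> k = (\<Sum>n=Suc k..N. ww v n * \<phi> n)"
definition chi :: "real \<Rightarrow> (nat \<Rightarrow> complex) \<Rightarrow> nat \<Rightarrow> (nat \<Rightarrow> real) \<Rightarrow> nat \<Rightarrow> real" where
  "chi a v N \<phi> m = cc a * SS v N \<phi> + (\<Sum>k<m. TT v N \<phi> k)"

lemma TT_filter: "(\<Sum>n=Suc k..N. g n) = (\<Sum>n\<le>N. if k < n then g n else (0::real))"
proof -
  have e: "{Suc k..N} = {n \<in> {..N}. k < n}" by auto
  show ?thesis unfolding e by (rule sum.inter_filter) simp
qed

lemma sum_if_less_min: "(\<Sum>k<m. if k < n then c else (0::real)) = real (min m n) * c"
proof -
  have "(\<Sum>k<m. if k < n then c else 0) = (\<Sum>k\<in>{k \<in> {..<m}. k < n}. c)"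
    by (rule sum.inter_filter[symmetric]) simp
  also have "{k \<in> {..<m}. k < n} = {..<min m n}" by auto
  finally show ?thesis by simp
qed

lemma row_fin:
  "(\<Sum>n\<le>N. kr a v m n * \<phi> n) = ww v m * chi a v N \<phi> m"
proof -
  have 1: "(\<Sum>k<m. TT v N \<phi> k) = (\<Sum>n\<le>N. real (min m n) * (ww v n * \<phi> n))"
  proof -
    have "(\<Sum>k<m. TT v N \<phi> k) = (\<Sum>k<m. \<Sum>n\<le>N. if k < n then ww v n * \<phi> n else 0)"
      unfolding TT_def by (simp add: TT_filter)
    also have "\<dots> = (\<Sum>n\<le>N. \<Sum>k<m. if k < n then ww v n * \<phi> n else 0)"
      by (rule sum.swap)
    also have "\<dots> = (\<Sum>n\<le>N. real (min m n) * (ww v n * \<phi> n))"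
      by (simp add: sum_if_less_min)
    finally show ?thesis .
  qed
  have "(\<Sum>n\<le>N. kr a v m n * \<phi> n) = ww v m * (\<Sum>n\<le>N. cc a * (ww v n * \<phi> n) + real (min m n) * (ww v n * \<phi> n))"
    unfolding kr_def sum_distrib_left by (rule sum.cong) (simp_all add: algebra_simps)
  also have "\<dots> = ww v m * chi a v N \<phi> m"
    unfolding chi_def 1 SS_def sum.distrib sum_distrib_left by simp
  finally show ?thesis .
qed

lemma X_id:
  "(\<Sum>m\<le>N. \<phi> m * (ww v m * chi a v N \<phi> m)) = cc a * (SS v N \<phi>)\<^sup>2 + (\<Sum>k<N. (TT v N \<phi> k)\<^sup>2)"
proof -
  have "(\<Sum>m\<le>N. \<phi> m * (ww v m * chi a v N \<phi> m))
      = (\<Sum>m\<le>N. cc a * SS v N \<phi> * (ww v m * \<phi> m) + (\<Sum>k<m. ww v m * \<phi> m * TT v N \<phi> k))"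
    unfolding chi_def by (rule sum.cong) (simp_all add: algebra_simps sum_distrib_left)
  also have "\<dots> = cc a * SS v N \<phi> * SS v N \<phi> + (\<Sum>m\<le>N. \<Sum>k<m. ww v m * \<phi> m * TT v N \<phi> k)"
    by (simp add: sum.distrib sum_distrib_left SS_def)
  also have "(\<Sum>m\<le>N. \<Sum>k<m. ww v m * \<phi> m * TT v N \<phi> k) = (\<Sum>k<N. \<Sum>m=Suc k..N. ww v m * \<phi> m * TT v N \<phi> k)"
    by (rule sum.nested_swap')
  also have "\<dots> = (\<Sum>k<N. (TT v N \<phi> k)\<^sup>2)"
    by (simp add: TT_def sum_distrib_right power2_eq_square)
  finally show ?thesis by (simp add: power2_eq_square)
qed

lemma TT_zero: "N \<le> k \<Longrightarrow> TT v N \<phi> k = 0"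
  by (simp add: TT_def)

lemma chi_const: "N \<le> m \<Longrightarrow> chi a v N \<phi> m = chi a v N \<phi> N"
proof (induction m rule: dec_induct)
  case base then show ?case by simp
next
  case (step m) then show ?case by (simp add: chi_def TT_zero)
qed

lemma chi_Suc: "chi a v N \<phi> (Suc k) - chi a v N \<phi> k = TT v N \<phi> k"
  by (simp add: chi_def)

lemma chi_0: "chi a v N \<phi> 0 = cc a * SS v N \<phi>"
  by (simp add: chi_def)



lemma l2_of_real: "l2 (\<lambda>n. complex_of_real (x n)) \<longleftrightarrow> summable (\<lambda>n. (x n)\<^sup>2)"
  by (simp add: l2_def)

lemma l2norm_of_real: "l2norm (\<lambda>n. complex_of_real (x n)) = sqrt (\<Sum>n. (x n)\<^sup>2)"
  by (simp add: l2norm_def)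

lemma Kreal:
  assumes M: "matrix_op_norm_le (Kmat a v) 1" and a1: "a < 1"
    and sx: "summable (\<lambda>n. (x n)\<^sup>2)"
  shows "\<forall>m. summable (\<lambda>n. kr a v m n * x n)"
    "summable (\<lambda>m. (\<Sum>n. kr a v m n * x n)\<^sup>2)"
    "(\<Sum>m. (\<Sum>n. kr a v m n * x n)\<^sup>2) \<le> (\<Sum>n. (x n)\<^sup>2)"
proof -
  let ?\<psi> = "\<lambda>n. complex_of_real (x n)"
  have l: "l2 ?\<psi>" using sx by (simp add: l2_of_real)
  have eq: "Kmat a v m n * ?\<psi> n = complex_of_real (kr a v m n * x n)" for m n
    using Kmat_kr[OF a1] by simp
  from M l have r: "\<forall>m. summable (\<lambda>n. Kmat a v m n * ?\<psi> n)"
    and l2y: "l2 (\<lambda>m. \<Sum>n. Kmat a v m n * ?\<psi> n)"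
    and nm: "l2norm (\<lambda>m. \<Sum>n. Kmat a v m n * ?\<psi> n) \<le> 1 * l2norm ?\<psi>"
    unfolding matrix_op_norm_le_def by blast+
  show rs: "\<forall>m. summable (\<lambda>n. kr a v m n * x n)"
    using r unfolding eq summable_complex_of_real .
  have ye: "(\<Sum>n. Kmat a v m n * ?\<psi> n) = complex_of_real (\<Sum>n. kr a v m n * x n)" for m
    unfolding eq by (rule suminf_of_real[symmetric]) (use rs in blast)
  show "summable (\<lambda>m. (\<Sum>n. kr a v m n * x n)\<^sup>2)"
    using l2y unfolding ye l2_of_real .
  have "sqrt (\<Sum>m. (\<Sum>n. kr a v m n * x n)\<^sup>2) \<le> sqrt (\<Sum>n. (x n)\<^sup>2)"
    using nm unfolding ye l2norm_of_real by simp
  then show "(\<Sum>m. (\<Sum>n. kr a v m n * x n)\<^sup>2) \<le> (\<Sum>n. (x n)\<^sup>2)"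
    by simp
qed

lemma K_fin_form:
  assumes M: "matrix_op_norm_le (Kmat a v) 1" and a1: "a < 1"
    and supp: "\<And>n. N < n \<Longrightarrow> \<phi> n = 0"
  shows "(\<Sum>m\<le>N. \<phi> m * (\<Sum>n\<le>N. kr a v m n * \<phi> n)) \<le> (\<Sum>n\<le>N. (\<phi> n)\<^sup>2)"
proof -
  have z: "n \<notin> {..N} \<Longrightarrow> \<phi> n = 0" for n using supp by auto
  have sx: "summable (\<lambda>n. (\<phi> n)\<^sup>2)"
    by (rule summable_finite[of "{..N}"]) (auto simp: z)
  have sumx: "(\<Sum>n. (\<phi> n)\<^sup>2) = (\<Sum>n\<le>N. (\<phi> n)\<^sup>2)"
    by (rule suminf_finite) (auto simp: z)
  define y where "y m = (\<Sum>n. kr a v m n * \<phi> n)" for m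
  have ye: "y m = (\<Sum>n\<le>N. kr a v m n * \<phi> n)" for m
    unfolding y_def by (rule suminf_finite) (auto simp: z)
  note K = Kreal[OF M a1 sx]
  have sy: "summable (\<lambda>m. (y m)\<^sup>2)" using K(2) by (simp add: y_def)
  have yb: "(\<Sum>m. (y m)\<^sup>2) \<le> (\<Sum>n\<le>N. (\<phi> n)\<^sup>2)" using K(3) sumx by (simp add: y_def)
  have "(\<Sum>m\<le>N. \<phi> m * y m) \<le> (\<Sum>m\<le>N. \<bar>\<phi> m\<bar> * \<bar>y m\<bar>)"
    by (intro sum_mono) (simp add: abs_mult[symmetric])
  also have "\<dots> \<le> L2_set \<phi> {..N} * L2_set y {..N}" by (rule L2_set_mult_ineq)
  also have "\<dots> \<le> sqrt (\<Sum>n\<le>N. (\<phi> n)\<^sup>2) * sqrt (\<Sum>n\<le>N. (\<phi> n)\<^sup>2)"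
  proof -
    have "(\<Sum>i\<le>N. (y i)\<^sup>2) \<le> (\<Sum>m. (y m)\<^sup>2)" by (rule sum_le_suminf[OF sy]) auto
    then have "L2_set y {..N} \<le> sqrt (\<Sum>n\<le>N. (\<phi> n)\<^sup>2)"
      unfolding L2_set_def using yb by simp
    then show ?thesis unfolding L2_set_def
      by (intro mult_left_mono) (simp_all add: sum_nonneg)
  qed
  also have "\<dots> = (\<Sum>n\<le>N. (\<phi> n)\<^sup>2)" by (simp add: sum_nonneg)
  finally show ?thesis by (simp add: ye)
qed

lemma Qf_nonneg: "l2 \<psi> \<Longrightarrow> a \<le> 1 \<Longrightarrow> 0 \<le> Qf a \<psi>"
  unfolding Qf_def using summable_diff_sq[of \<psi>]
  by (intro add_nonneg_nonneg mult_nonneg_nonneg suminf_nonneg) auto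

lemma K_partial:
  assumes M: "matrix_op_norm_le (Kmat a v) 1" and a0: "0 \<le> a" and a1: "a < 1" and l: "l2 \<psi>"
  shows "(\<Sum>n\<le>N. cmod (v n) * (cmod (\<psi> n))\<^sup>2) \<le> Qf a \<psi>"
proof -
  define p where "p n = cmod (\<psi> n)" for n
  define \<phi> where "\<phi> n = (if n \<le> N then ww v n * p n else 0)" for n
  define \<beta> where "\<beta> k = p k - p (Suc k)" for k
  let ?S = "SS v N \<phi>" and ?T = "TT v N \<phi>"
  define Y where "Y = (\<Sum>n\<le>N. cmod (v n) * (p n)\<^sup>2)"
  define X where "X = cc a * ?S\<^sup>2 + (\<Sum>k<N. (?T k)\<^sup>2)"
  have Yphi: "Y = (\<Sum>n\<le>N. (\<phi> n)\<^sup>2)"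
    unfolding Y_def \<phi>_def by (rule sum.cong) (auto simp: power_mult_distrib ww_sq)
  have XY: "X \<le> Y"
  proof -
    have "(\<Sum>m\<le>N. \<phi> m * (\<Sum>n\<le>N. kr a v m n * \<phi> n)) \<le> (\<Sum>n\<le>N. (\<phi> n)\<^sup>2)"
      by (rule K_fin_form[OF M a1]) (simp add: \<phi>_def)
    then show ?thesis unfolding row_fin X_id X_def Yphi .
  qed
  have pn: "p n = p 0 - (\<Sum>k<n. \<beta> k)" for n
    unfolding \<beta>_def sum_lessThan_telescope' by simp
  have Yexp: "Y = p 0 * ?S - (\<Sum>k<N. \<beta> k * ?T k)"
  proof -
    have "Y = (\<Sum>n\<le>N. ww v n * \<phi> n * p n)"
      unfolding Y_def \<phi>_def by (rule sum.cong) (auto simp: power2_eq_square ww_sq'[symmetric] algebra_simps)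
    also have "\<dots> = (\<Sum>n\<le>N. p 0 * (ww v n * \<phi> n) - (\<Sum>k<n. ww v n * \<phi> n * \<beta> k))"
    proof (rule sum.cong)
      fix n
      show "ww v n * \<phi> n * p n = p 0 * (ww v n * \<phi> n) - (\<Sum>k<n. ww v n * \<phi> n * \<beta> k)"
        by (subst pn[of n]) (simp add: sum_distrib_left sum_distrib_right right_diff_distrib mult.commute)
    qed simp
    also have "\<dots> = p 0 * ?S - (\<Sum>n\<le>N. \<Sum>k<n. ww v n * \<phi> n * \<beta> k)"
      by (simp add: sum_subtractf SS_def sum_distrib_left)
    also have "(\<Sum>n\<le>N. \<Sum>k<n. ww v n * \<phi> n * \<beta> k) = (\<Sum>k<N. \<Sum>n=Suc k..N. ww v n * \<phi> n * \<beta> k)"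
      by (rule sum.nested_swap')
    also have "\<dots> = (\<Sum>k<N. \<beta> k * ?T k)"
      by (simp add: TT_def sum_distrib_left sum_distrib_right algebra_simps)
    finally show ?thesis .
  qed
  have b1: "p 0 * ?S \<le> ((1 - a) * (p 0)\<^sup>2 + cc a * ?S\<^sup>2) / 2"
  proof -
    have "0 \<le> (1 - a) * (p 0 - cc a * ?S)\<^sup>2" using a1 by simp
    also have "(1 - a) * (p 0 - cc a * ?S)\<^sup>2 = (1 - a) * (p 0)\<^sup>2 - 2 * ((1 - a) * cc a) * p 0 * ?S + ((1 - a) * cc a) * cc a * ?S\<^sup>2"
      by (simp add: power2_eq_square algebra_simps)
    finally show ?thesis unfolding cc_inv[OF a1] by simp
  qed
  have b2: "- (\<beta> k * ?T k) \<le> ((\<beta> k)\<^sup>2 + (?T k)\<^sup>2) / 2" for k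
  proof -
    have "0 \<le> (\<beta> k + ?T k)\<^sup>2" by simp
    then show ?thesis by (simp add: power2_eq_square algebra_simps)
  qed
  have "Y \<le> ((1 - a) * (p 0)\<^sup>2 + cc a * ?S\<^sup>2) / 2 + (\<Sum>k<N. ((\<beta> k)\<^sup>2 + (?T k)\<^sup>2) / 2)"
  proof -
    have "(\<Sum>k<N. - (\<beta> k * ?T k)) \<le> (\<Sum>k<N. ((\<beta> k)\<^sup>2 + (?T k)\<^sup>2) / 2)"
      by (rule sum_mono) (rule b2)
    moreover have "(\<Sum>k<N. - (\<beta> k * ?T k)) = - (\<Sum>k<N. \<beta> k * ?T k)" by (rule sum_negf)
    ultimately show ?thesis unfolding Yexp using b1 by linarith
  qed
  also have "\<dots> = ((1 - a) * (p 0)\<^sup>2 + (\<Sum>k<N. (\<beta> k)\<^sup>2) + X) / 2"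
    by (simp add: X_def sum.distrib sum_divide_distrib[symmetric] field_simps)
  finally have "Y \<le> (1 - a) * (p 0)\<^sup>2 + (\<Sum>k<N. (\<beta> k)\<^sup>2)" using XY by simp
  also have "(\<Sum>k<N. (\<beta> k)\<^sup>2) \<le> (\<Sum>k<N. (cmod (\<psi> k - \<psi> (Suc k)))\<^sup>2)"
  proof (rule sum_mono)
    fix k
    have "\<bar>\<beta> k\<bar> \<le> cmod (\<psi> k - \<psi> (Suc k))" unfolding \<beta>_def p_def by (rule norm_triangle_ineq3)
    then show "(\<beta> k)\<^sup>2 \<le> (cmod (\<psi> k - \<psi> (Suc k)))\<^sup>2"
      by (metis abs_ge_zero power2_abs power_mono)
  qed
  also have "(\<Sum>k<N. (cmod (\<psi> k - \<psi> (Suc k)))\<^sup>2) \<le> (\<Sum>k. (cmod (\<psi> k - \<psi> (Suc k)))\<^sup>2)"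
    by (rule sum_le_suminf[OF summable_diff_sq[OF l]]) auto
  finally show ?thesis unfolding Y_def p_def Qf_def by simp
qed

lemma K_imp_absV:
  assumes M: "matrix_op_norm_le (Kmat a v) 1" and a0: "0 \<le> a" and a1: "a < 1"
  shows "absV_le_negLap (complex_of_real a) v"
  unfolding absV_le_negLap_def
proof (intro allI impI)
  fix \<psi> assume l: "l2 \<psi>"
  let ?f = "\<lambda>n. cmod (v n) * (cmod (\<psi> n))\<^sup>2"
  have bnd: "sum ?f {..<n} \<le> Qf a \<psi>" for n
  proof (cases n)
    case 0 then show ?thesis using Qf_nonneg[OF l] a1 by simp
  next
    case (Suc N) then show ?thesis using K_partial[OF M a0 a1 l, of N] by (simp add: lessThan_Suc_atMost)
  qed
  have s: "summable ?f" by (rule summableI_nonneg_bounded[OF _ bnd]) simp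
  moreover have "suminf ?f \<le> Qf a \<psi>" by (rule suminf_le_const[OF s bnd])
  ultimately show "summable ?f \<and> suminf ?f \<le> Re (l2inner \<psi> (negLap (complex_of_real a) \<psi>))"
    using Q_identity[OF l, of a] by simp
qed



lemma absV_sum_v:
  assumes V: "absV_le_negLap (complex_of_real a) v" and a1: "a < 1"
  shows "summable (\<lambda>n. cmod (v n))" "(\<Sum>n. cmod (v n)) \<le> 2 - a"
proof -
  have bN: "(\<Sum>n\<le>N. cmod (v n)) \<le> 2 - a" for N
  proof -
    define \<psi> where "\<psi> n = (if n \<le> N then (1::complex) else 0)" for n
    have z: "n \<notin> {..N} \<Longrightarrow> \<psi> n = 0" for n by (simp add: \<psi>_def)
    have l: "l2 \<psi>" unfolding l2_def by (rule summable_finite[of "{..N}"]) (auto simp: z)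
    have d: "(cmod (\<psi> n - \<psi> (Suc n)))\<^sup>2 = (if n = N then 1 else 0)" for n
      by (auto simp: \<psi>_def)
    have "(\<Sum>n. (cmod (\<psi> n - \<psi> (Suc n)))\<^sup>2) = (\<Sum>n\<in>{N}. (cmod (\<psi> n - \<psi> (Suc n)))\<^sup>2)"
      by (rule suminf_finite) (auto simp: d)
    then have Q: "Qf a \<psi> = 2 - a" by (simp add: Qf_def d \<psi>_def)
    from V l have s: "summable (\<lambda>n. cmod (v n) * (cmod (\<psi> n))\<^sup>2)"
      and b: "(\<Sum>n. cmod (v n) * (cmod (\<psi> n))\<^sup>2) \<le> Re (l2inner \<psi> (negLap (complex_of_real a) \<psi>))"
      unfolding absV_le_negLap_def by blast+
    have "(\<Sum>n\<le>N. cmod (v n)) = (\<Sum>n\<le>N. cmod (v n) * (cmod (\<psi> n))\<^sup>2)"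
      by (rule sum.cong) (auto simp: \<psi>_def)
    also have "\<dots> \<le> (\<Sum>n. cmod (v n) * (cmod (\<psi> n))\<^sup>2)"
      by (rule sum_le_suminf[OF s]) auto
    also have "\<dots> \<le> 2 - a" using b Q_identity[OF l, of a] Q by simp
    finally show ?thesis .
  qed
  have bn: "(\<Sum>n<k. cmod (v n)) \<le> 2 - a" for k
  proof (cases k)
    case 0 then show ?thesis using a1 by simp
  next
    case (Suc N) then show ?thesis using bN[of N] by (simp add: lessThan_Suc_atMost)
  qed
  show s: "summable (\<lambda>n. cmod (v n))" by (rule summableI_nonneg_bounded[OF _ bn]) simp
  show "(\<Sum>n. cmod (v n)) \<le> 2 - a" by (rule suminf_le_const[OF s bn])
qed

definition rt :: "nat \<Rightarrow> nat \<Rightarrow> nat \<Rightarrow> real" where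
  "rt N j m = max 0 (1 - real (m - N) / real (Suc j))"

lemma rt_le: "m \<le> N \<Longrightarrow> rt N j m = 1" by (simp add: rt_def)
lemma rt_zero: "N + Suc j \<le> m \<Longrightarrow> rt N j m = 0" by (simp add: rt_def field_simps)
lemma rt_mid: "N \<le> m \<Longrightarrow> m < N + Suc j \<Longrightarrow> rt N j m - rt N j (Suc m) = 1 / real (Suc j)"
proof -
  assume h: "N \<le> m" "m < N + Suc j"
  have e1: "Suc m - N = Suc (m - N)" using h by simp
  have "real (Suc (m - N)) \<le> real (Suc j)" using h by simp
  then have "0 \<le> 1 - real (Suc (m - N)) / real (Suc j)" by (simp add: field_simps)
  moreover have "0 \<le> 1 - real (m - N) / real (Suc j)" using h by (simp add: field_simps)
  ultimately show ?thesis unfolding rt_def e1 by (simp add: field_simps)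
qed
lemma rt_lim: "(\<lambda>j. rt N j m) \<longlonglongrightarrow> 1"
proof -
  have "(\<lambda>j. real (m - N) * inverse (real (Suc j))) \<longlonglongrightarrow> real (m - N) * 0"
    by (intro tendsto_mult tendsto_const LIMSEQ_inverse_real_of_nat)
  then have "(\<lambda>j. max 0 (1 - real (m - N) * inverse (real (Suc j)))) \<longlonglongrightarrow> max 0 (1 - real (m - N) * 0)"
    by (intro tendsto_max tendsto_diff tendsto_const)
  then show ?thesis by (simp add: rt_def divide_inverse)
qed

lemma r_div_sq: "(r::real) \<noteq> 0 \<Longrightarrow> r * (X / r\<^sup>2) = X / r"
  by (simp add: power2_eq_square field_simps)

lemma Q_ramp:
  assumes a1: "a < 1"
  shows "Qf a (\<lambda>m. complex_of_real (chi a v N \<phi> m * rt N j m))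
       = cc a * (SS v N \<phi>)\<^sup>2 + (\<Sum>k<N. (TT v N \<phi> k)\<^sup>2) + (chi a v N \<phi> N)\<^sup>2 / real (Suc j)"
proof -
  let ?c = "chi a v N \<phi>"
  let ?g = "\<lambda>m. ?c m * rt N j m"
  have dlow: "m < N \<Longrightarrow> (cmod (complex_of_real (?g m) - complex_of_real (?g (Suc m))))\<^sup>2 = (TT v N \<phi> m)\<^sup>2" for m
  proof -
    assume "m < N"
    then have "?g m - ?g (Suc m) = - TT v N \<phi> m"
      using chi_Suc[of a v N \<phi> m] by (simp add: rt_le)
    then show ?thesis
      by (metis norm_of_real of_real_diff power2_abs power2_minus)
  qed
  have dmid: "N \<le> m \<Longrightarrow> m < N + Suc j \<Longrightarrow> (cmod (complex_of_real (?g m) - complex_of_real (?g (Suc m))))\<^sup>2 = (?c N)\<^sup>2 / (real (Suc j))\<^sup>2" for m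
  proof -
    assume h: "N \<le> m" "m < N + Suc j"
    have "?g m - ?g (Suc m) = ?c N * (rt N j m - rt N j (Suc m))"
      using chi_const[of N m a v \<phi>] chi_const[of N "Suc m" a v \<phi>] h by (simp add: algebra_simps)
    also have "\<dots> = ?c N / real (Suc j)" using rt_mid[OF h] by simp
    finally have "?g m - ?g (Suc m) = ?c N / real (Suc j)" .
    then show ?thesis
      by (metis norm_of_real of_real_diff power2_abs power_divide)
  qed
  have dhigh: "N + Suc j \<le> m \<Longrightarrow> (cmod (complex_of_real (?g m) - complex_of_real (?g (Suc m))))\<^sup>2 = 0" for m
    by (simp add: rt_zero)
  let ?d = "\<lambda>m. (cmod (complex_of_real (?g m) - complex_of_real (?g (Suc m))))\<^sup>2"
  have "(\<Sum>m. ?d m) = (\<Sum>m\<in>{0..<N + Suc j}. ?d m)"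
  proof (rule suminf_finite)
    fix m assume "m \<notin> {0..<N + Suc j}"
    then have "N + Suc j \<le> m" by simp
    then show "?d m = 0" by (rule dhigh)
  qed simp
  also have "\<dots> = (\<Sum>m\<in>{0..<N}. ?d m) + (\<Sum>m\<in>{N..<N + Suc j}. ?d m)"
    by (rule sum.atLeastLessThan_concat[symmetric]) auto
  also have "(\<Sum>m\<in>{0..<N}. ?d m) = (\<Sum>k<N. (TT v N \<phi> k)\<^sup>2)"
    unfolding atLeast0LessThan apply (rule sum.cong[OF refl]) apply (rule dlow) by simp
  also have "(\<Sum>m\<in>{N..<N + Suc j}. ?d m) = (\<Sum>m\<in>{N..<N + Suc j}. (?c N)\<^sup>2 / (real (Suc j))\<^sup>2)"
    apply (rule sum.cong[OF refl]) apply (rule dmid) by auto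
  also have "\<dots> = real (Suc j) * ((?c N)\<^sup>2 / (real (Suc j))\<^sup>2)" by simp
  also have "\<dots> = (?c N)\<^sup>2 / real (Suc j)"
    using r_div_sq[of "real (Suc j)" "(?c N)\<^sup>2"] by simp
  finally have S: "(\<Sum>m. ?d m) = (\<Sum>k<N. (TT v N \<phi> k)\<^sup>2) + (?c N)\<^sup>2 / real (Suc j)" .
  have g0: "?g 0 = cc a * SS v N \<phi>" by (simp add: rt_le chi_0)
  have "(1 - a) * (cmod (complex_of_real (?g 0)))\<^sup>2 = (1 - a) * (cc a * SS v N \<phi>)\<^sup>2"
    unfolding g0 norm_of_real by (simp only: power2_abs)
  also have "\<dots> = ((1 - a) * cc a) * cc a * (SS v N \<phi>)\<^sup>2" by (simp add: power2_eq_square)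
  also have "\<dots> = cc a * (SS v N \<phi>)\<^sup>2" unfolding cc_inv[OF a1] by simp
  finally show ?thesis unfolding Qf_def S by simp
qed



lemma chi_bound:
  assumes V: "absV_le_negLap (complex_of_real a) v" and a1: "a < 1"
  shows "summable (\<lambda>m. cmod (v m) * (chi a v N \<phi> m)\<^sup>2)"
    "(\<Sum>m. cmod (v m) * (chi a v N \<phi> m)\<^sup>2) \<le> cc a * (SS v N \<phi>)\<^sup>2 + (\<Sum>k<N. (TT v N \<phi> k)\<^sup>2)"
proof -
  let ?c = "chi a v N \<phi>"
  define X where "X = cc a * (SS v N \<phi>)\<^sup>2 + (\<Sum>k<N. (TT v N \<phi> k)\<^sup>2)"
  have pj: "(\<Sum>m<M. cmod (v m) * (?c m * rt N j m)\<^sup>2) \<le> X + (?c N)\<^sup>2 * inverse (real (Suc j))" for M j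
  proof -
    define \<psi> where "\<psi> m = complex_of_real (?c m * rt N j m)" for m
    have z: "m \<notin> {..<N + Suc j} \<Longrightarrow> \<psi> m = 0" for m by (simp add: \<psi>_def rt_zero)
    have l: "l2 \<psi>" unfolding l2_def by (rule summable_finite[of "{..<N + Suc j}"]) (auto simp: z)
    from V l have s: "summable (\<lambda>n. cmod (v n) * (cmod (\<psi> n))\<^sup>2)"
      and b: "(\<Sum>n. cmod (v n) * (cmod (\<psi> n))\<^sup>2) \<le> Re (l2inner \<psi> (negLap (complex_of_real a) \<psi>))"
      unfolding absV_le_negLap_def by blast+
    have e: "cmod (v n) * (cmod (\<psi> n))\<^sup>2 = cmod (v n) * (?c n * rt N j n)\<^sup>2" for n
      unfolding \<psi>_def norm_of_real by (simp only: power2_abs)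
    have "(\<Sum>m<M. cmod (v m) * (?c m * rt N j m)\<^sup>2) \<le> (\<Sum>n. cmod (v n) * (cmod (\<psi> n))\<^sup>2)"
      unfolding e by (rule sum_le_suminf[OF s[unfolded e]]) auto
    also have "\<dots> \<le> Qf a \<psi>" using b Q_identity[OF l, of a] by simp
    also have "Qf a \<psi> = X + (?c N)\<^sup>2 / real (Suc j)" unfolding \<psi>_def X_def by (rule Q_ramp[OF a1])
    finally show ?thesis by (simp add: divide_inverse)
  qed
  have pM: "(\<Sum>m<M. cmod (v m) * (?c m)\<^sup>2) \<le> X" for M
  proof -
    have L1: "(\<lambda>j. \<Sum>m<M. cmod (v m) * (?c m * rt N j m)\<^sup>2) \<longlonglongrightarrow> (\<Sum>m<M. cmod (v m) * (?c m * 1)\<^sup>2)"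
      by (intro tendsto_sum tendsto_mult tendsto_const tendsto_power rt_lim)
    have L2: "(\<lambda>j. X + (?c N)\<^sup>2 * inverse (real (Suc j))) \<longlonglongrightarrow> X + (?c N)\<^sup>2 * 0"
      by (intro tendsto_add tendsto_mult tendsto_const LIMSEQ_inverse_real_of_nat)
    have "(\<Sum>m<M. cmod (v m) * (?c m * 1)\<^sup>2) \<le> X + (?c N)\<^sup>2 * 0"
      by (rule tendsto_le[OF trivial_limit_sequentially L2 L1]) (intro always_eventually allI pj)
    then show ?thesis by simp
  qed
  show s: "summable (\<lambda>m. cmod (v m) * (?c m)\<^sup>2)"
    by (rule summableI_nonneg_bounded[OF _ pM]) simp
  show "(\<Sum>m. cmod (v m) * (?c m)\<^sup>2) \<le> cc a * (SS v N \<phi>)\<^sup>2 + (\<Sum>k<N. (TT v N \<phi> k)\<^sup>2)"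
    using suminf_le_const[OF s pM] by (simp add: X_def)
qed

lemma sqrt_trick:
  fixes F G :: real
  assumes "0 \<le> F" "0 \<le> G" "G \<le> sqrt F * sqrt G"
  shows "G \<le> F"
proof (cases "G = 0")
  case True then show ?thesis using assms by simp
next
  case False
  then have gp: "0 < sqrt G" using assms by simp
  have "sqrt G * sqrt G \<le> sqrt F * sqrt G" using assms by simp
  then have "sqrt G \<le> sqrt F" using gp by (rule mult_right_le_imp_le)
  then show ?thesis using assms by simp
qed

lemma fin_op_bound:
  assumes V: "absV_le_negLap (complex_of_real a) v" and a1: "a < 1"
  shows "summable (\<lambda>m. (\<Sum>n\<le>N. kr a v m n * \<phi> n)\<^sup>2)"
    "(\<Sum>m. (\<Sum>n\<le>N. kr a v m n * \<phi> n)\<^sup>2) \<le> (\<Sum>n\<le>N. (\<phi> n)\<^sup>2)"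
proof -
  define y where "y m = (\<Sum>n\<le>N. kr a v m n * \<phi> n)" for m
  have ye: "(y m)\<^sup>2 = cmod (v m) * (chi a v N \<phi> m)\<^sup>2" for m
    unfolding y_def row_fin by (simp add: power_mult_distrib ww_sq)
  note cb = chi_bound[OF V a1, of N \<phi>]
  show sy: "summable (\<lambda>m. (\<Sum>n\<le>N. kr a v m n * \<phi> n)\<^sup>2)"
    using cb(1) ye by (simp add: y_def)
  have sy': "summable (\<lambda>m. (y m)\<^sup>2)" using sy by (simp add: y_def)
  define G where "G = (\<Sum>m. (y m)\<^sup>2)"
  define F where "F = (\<Sum>n\<le>N. (\<phi> n)\<^sup>2)"
  have G1: "G \<le> (\<Sum>m\<le>N. \<phi> m * y m)"
    using cb(2) unfolding G_def ye[symmetric] y_def row_fin X_id .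
  have "(\<Sum>m\<le>N. \<phi> m * y m) \<le> (\<Sum>m\<le>N. \<bar>\<phi> m\<bar> * \<bar>y m\<bar>)"
    by (intro sum_mono) (simp add: abs_mult[symmetric])
  also have "\<dots> \<le> L2_set \<phi> {..N} * L2_set y {..N}" by (rule L2_set_mult_ineq)
  also have "\<dots> \<le> sqrt F * sqrt G"
  proof -
    have "(\<Sum>i\<le>N. (y i)\<^sup>2) \<le> G" unfolding G_def by (rule sum_le_suminf[OF sy']) auto
    then have "L2_set y {..N} \<le> sqrt G" unfolding L2_set_def by simp
    then show ?thesis unfolding L2_set_def F_def
      by (intro mult_left_mono) (simp_all add: sum_nonneg)
  qed
  finally have "G \<le> sqrt F * sqrt G" using G1 by simp
  then have "G \<le> F"
    by (rule sqrt_trick[rotated 2]) (simp_all add: F_def G_def sum_nonneg suminf_nonneg sy')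
  then show "(\<Sum>m. (\<Sum>n\<le>N. kr a v m n * \<phi> n)\<^sup>2) \<le> (\<Sum>n\<le>N. (\<phi> n)\<^sup>2)"
    by (simp add: G_def F_def y_def)
qed


lemma real_op_bound:
  assumes V: "absV_le_negLap (complex_of_real a) v" and a1: "a < 1"
    and sx: "summable (\<lambda>n. (x n)\<^sup>2)"
  shows "\<forall>m. summable (\<lambda>n. kr a v m n * x n)"
    "summable (\<lambda>m. (\<Sum>n. kr a v m n * x n)\<^sup>2)"
    "(\<Sum>m. (\<Sum>n. kr a v m n * x n)\<^sup>2) \<le> (\<Sum>n. (x n)\<^sup>2)"
proof -
  have sv: "summable (\<lambda>n. cmod (v n))" by (rule absV_sum_v(1)[OF V a1])
  have sw: "summable (\<lambda>n. (ww v n)\<^sup>2)" using sv by (simp add: ww_sq)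
  have swx: "summable (\<lambda>n. \<bar>ww v n\<bar> * \<bar>x n\<bar>)" by (rule summable_sq_mult(1)[OF sw sx])
  have cc0: "0 \<le> cc a" using cc_pos[OF a1] by simp
  show rows: "\<forall>m. summable (\<lambda>n. kr a v m n * x n)"
  proof
    fix m
    show "summable (\<lambda>n. kr a v m n * x n)"
    proof (rule summable_comparison_test'[OF summable_mult[OF swx, of "ww v m * (cc a + real m)"]])
      fix n
      have "norm (kr a v m n * x n) = ww v m * (cc a + real (min m n)) * (\<bar>ww v n\<bar> * \<bar>x n\<bar>)"
        unfolding kr_def using ww_nonneg[of v m] ww_nonneg[of v n] cc0
        by (simp add: abs_mult)
      also have "\<dots> \<le> ww v m * (cc a + real m) * (\<bar>ww v n\<bar> * \<bar>x n\<bar>)"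
        by (intro mult_right_mono mult_left_mono) (simp_all add: ww_nonneg)
      finally show "norm (kr a v m n * x n) \<le> ww v m * (cc a + real m) * (\<bar>ww v n\<bar> * \<bar>x n\<bar>)" .
    qed
  qed
  define y where "y m = (\<Sum>n. kr a v m n * x n)" for m
  have AN: "(\<Sum>m\<le>N. (y m)\<^sup>2) \<le> (\<Sum>n. (x n)\<^sup>2)" for N
  proof -
    define A where "A = (\<Sum>m\<le>N. (y m)\<^sup>2)"
    define z where "z n = (\<Sum>m\<le>N. kr a v n m * y m)" for n
    have "A = (\<Sum>m\<le>N. \<Sum>n. y m * (kr a v m n * x n))"
      unfolding A_def
    proof (rule sum.cong[OF refl])
      fix m
      show "(y m)\<^sup>2 = (\<Sum>n. y m * (kr a v m n * x n))"
        using suminf_mult[of "\<lambda>n. kr a v m n * x n" "y m"] rows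
        by (simp add: y_def power2_eq_square)
    qed
    also have "\<dots> = (\<Sum>n. \<Sum>m\<le>N. y m * (kr a v m n * x n))"
      by (rule suminf_sum[symmetric]) (use rows in \<open>simp add: summable_mult\<close>)
    also have "\<dots> = (\<Sum>n. z n * x n)"
      unfolding z_def sum_distrib_right
      by (rule suminf_cong, rule sum.cong[OF refl]) (simp add: algebra_simps, metis kr_sym)
    finally have Az: "A = (\<Sum>n. z n * x n)" .
    note fb = fin_op_bound[OF V a1, where N=N and \<phi>=y]
    have sz: "summable (\<lambda>n. (z n)\<^sup>2)" using fb(1) by (simp add: z_def)
    have zb: "(\<Sum>n. (z n)\<^sup>2) \<le> A" using fb(2) by (simp add: z_def A_def)
    have "A \<le> sqrt (\<Sum>n. (z n)\<^sup>2) * sqrt (\<Sum>n. (x n)\<^sup>2)"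
      unfolding Az using CS_series[OF sz sx] by linarith
    also have "\<dots> \<le> sqrt A * sqrt (\<Sum>n. (x n)\<^sup>2)"
      using zb by (intro mult_right_mono) (simp_all add: suminf_nonneg sx)
    finally have "A \<le> sqrt (\<Sum>n. (x n)\<^sup>2) * sqrt A" by (simp add: mult.commute)
    then have "A \<le> (\<Sum>n. (x n)\<^sup>2)"
      by (rule sqrt_trick[rotated 2]) (simp_all add: A_def sum_nonneg suminf_nonneg sx)
    then show ?thesis by (simp add: A_def)
  qed
  have bn: "(\<Sum>m<k. (y m)\<^sup>2) \<le> (\<Sum>n. (x n)\<^sup>2)" for k
  proof (cases k)
    case 0 then show ?thesis by (simp add: suminf_nonneg sx)
  next
    case (Suc N) then show ?thesis using AN[of N] by (simp add: lessThan_Suc_atMost)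
  qed
  have s: "summable (\<lambda>m. (y m)\<^sup>2)" by (rule summableI_nonneg_bounded[OF _ bn]) simp
  show "summable (\<lambda>m. (\<Sum>n. kr a v m n * x n)\<^sup>2)" using s by (simp add: y_def)
  show "(\<Sum>m. (\<Sum>n. kr a v m n * x n)\<^sup>2) \<le> (\<Sum>n. (x n)\<^sup>2)"
    using suminf_le_const[OF s bn] by (simp add: y_def)
qed



lemma absV_imp_K:
  assumes V: "absV_le_negLap (complex_of_real a) v" and a1: "a < 1"
  shows "matrix_op_norm_le (Kmat a v) 1"
  unfolding matrix_op_norm_le_def
proof (intro allI impI)
  fix \<psi> assume l: "l2 \<psi>"
  define x where "x n = Re (\<psi> n)" for n
  define y where "y n = Im (\<psi> n)" for n
  have sp: "summable (\<lambda>n. (cmod (\<psi> n))\<^sup>2)" using l by (simp add: l2_def)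
  have cm: "(cmod (\<psi> n))\<^sup>2 = (x n)\<^sup>2 + (y n)\<^sup>2" for n by (simp add: x_def y_def cmod_power2)
  have sx: "summable (\<lambda>n. (x n)\<^sup>2)"
    by (rule summable_comparison_test'[OF sp]) (simp add: cm)
  have sy: "summable (\<lambda>n. (y n)\<^sup>2)"
    by (rule summable_comparison_test'[OF sp]) (simp add: cm)
  note R = real_op_bound[OF V a1 sx] and I = real_op_bound[OF V a1 sy]
  define p where "p m = (\<Sum>n. kr a v m n * x n)" for m
  define q where "q m = (\<Sum>n. kr a v m n * y n)" for m
  have ReK: "Re (Kmat a v m n * \<psi> n) = kr a v m n * x n" for m n
    by (simp add: Kmat_kr[OF a1] x_def)
  have ImK: "Im (Kmat a v m n * \<psi> n) = kr a v m n * y n" for m n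
    by (simp add: Kmat_kr[OF a1] y_def)
  have sums: "(\<lambda>n. Kmat a v m n * \<psi> n) sums Complex (p m) (q m)" for m
    unfolding sums_complex_iff ReK ImK p_def q_def using R(1) I(1)
    by (simp add: summable_sums)
  have G1: "\<forall>m. summable (\<lambda>n. Kmat a v m n * \<psi> n)"
    using sums sums_summable by blast
  have se: "(\<Sum>n. Kmat a v m n * \<psi> n) = Complex (p m) (q m)" for m
    using sums[of m] by (rule sums_unique[symmetric])
  have cq: "(cmod (Complex (p m) (q m)))\<^sup>2 = (p m)\<^sup>2 + (q m)\<^sup>2" for m
    by (simp add: cmod_power2)
  have spq: "summable (\<lambda>m. (p m)\<^sup>2 + (q m)\<^sup>2)"
    using R(2) I(2) by (intro summable_add) (simp_all add: p_def q_def)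
  have G2: "l2 (\<lambda>m. \<Sum>n. Kmat a v m n * \<psi> n)"
    unfolding l2_def se cq by (rule spq)
  have "(\<Sum>m. (p m)\<^sup>2 + (q m)\<^sup>2) = (\<Sum>m. (p m)\<^sup>2) + (\<Sum>m. (q m)\<^sup>2)"
    using R(2) I(2) by (intro suminf_add[symmetric]) (simp_all add: p_def q_def)
  also have "\<dots> \<le> (\<Sum>n. (x n)\<^sup>2) + (\<Sum>n. (y n)\<^sup>2)"
    using R(3) I(3) by (simp add: p_def q_def)
  also have "\<dots> = (\<Sum>n. (cmod (\<psi> n))\<^sup>2)"
    unfolding cm using sx sy by (intro suminf_add) 
  finally have G3: "l2norm (\<lambda>m. \<Sum>n. Kmat a v m n * \<psi> n) \<le> 1 * l2norm \<psi>"
    unfolding l2norm_def se cq by simp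
  show "(\<forall>m. summable (\<lambda>n. Kmat a v m n * \<psi> n)) \<and> l2 (\<lambda>m. \<Sum>n. Kmat a v m n * \<psi> n) \<and>
        l2norm (\<lambda>m. \<Sum>n. Kmat a v m n * \<psi> n) \<le> 1 * l2norm \<psi>"
    using G1 G2 G3 by blast
qed



lemma cis_quad:
  fixes t :: real assumes "\<bar>t\<bar> \<le> 2"
  shows "(cis (arccos (t/2)))\<^sup>2 + 1 = complex_of_real t * cis (arccos (t/2))"
proof -
  let ?th = "arccos (t/2)"
  have c: "cos ?th = t / 2" using assms by (intro cos_arccos) auto
  have sc: "(sin ?th)\<^sup>2 + (cos ?th)\<^sup>2 = 1" by (rule sin_cos_squared_add)
  show ?thesis
  proof (rule complex_eqI)
    have s2: "sin ?th * sin ?th = 1 - t * t / 4" using sc c by (simp add: power2_eq_square)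
    show "Re ((cis ?th)\<^sup>2 + 1) = Re (complex_of_real t * cis ?th)"
      by (simp add: power2_eq_square c s2 algebra_simps)
    show "Im ((cis ?th)\<^sup>2 + 1) = Im (complex_of_real t * cis ?th)"
      using c by (simp add: power2_eq_square algebra_simps)
  qed
qed

lemma finite_supp_l2:
  assumes "\<And>n. M \<le> n \<Longrightarrow> f n = 0"
  shows "l2 f" "l2norm f = sqrt (\<Sum>n<M. (cmod (f n))\<^sup>2)"
proof -
  have z: "n \<notin> {..<M} \<Longrightarrow> (cmod (f n))\<^sup>2 = 0" for n using assms by simp
  show "l2 f" unfolding l2_def by (rule summable_finite[of "{..<M}"]) (use z in auto)
  show "l2norm f = sqrt (\<Sum>n<M. (cmod (f n))\<^sup>2)"
    unfolding l2norm_def by (subst suminf_finite[of "{..<M}"]) (use z in auto)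
qed

lemma weyl:
  fixes t :: real
  assumes t2: "\<bar>t\<bar> \<le> 2" and v0: "v \<longlonglongrightarrow> 0"
  shows "\<exists>\<psi>\<in>Hdom a' v. C * l2norm (\<lambda>n. Hop a' v \<psi> n - complex_of_real t * \<psi> n) < l2norm \<psi>"
proof -
  define C' where "C' = max C 1"
  have C'1: "1 \<le> C'" by (simp add: C'_def)
  define \<epsilon> where "\<epsilon> = 1 / (2 * C')"
  have \<epsilon>0: "0 < \<epsilon>" using C'1 by (simp add: \<epsilon>_def)
  obtain N0 where N0: "\<And>n. N0 \<le> n \<Longrightarrow> cmod (v n) < \<epsilon>"
    using v0 \<epsilon>0 unfolding LIMSEQ_iff by force
  define N where "N = N0 + 2"
  define L where "L = nat \<lceil>256 * C'\<^sup>2\<rceil> + 2"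
  have L2: "2 \<le> L" by (simp add: L_def)
  have Lbig: "256 * C'\<^sup>2 < real L"
  proof -
    have "256 * C'\<^sup>2 \<le> of_int \<lceil>256 * C'\<^sup>2\<rceil>" by (rule le_of_int_ceiling)
    moreover have "real L = 2 + of_int \<lceil>256 * C'\<^sup>2\<rceil>" by (simp add: L_def)
    ultimately show ?thesis by linarith
  qed
  define e where "e = cis (arccos (t/2))"
  have e1: "cmod (e ^ n) = 1" for n by (simp add: e_def norm_power)
  have eq: "e ^ n + e ^ (n + 2) = complex_of_real t * e ^ (n + 1)" for n
  proof -
    have "e ^ n + e ^ (n + 2) = e ^ n * (e\<^sup>2 + 1)" by (simp add: power_add power2_eq_square algebra_simps)
    also have "\<dots> = e ^ n * (complex_of_real t * e)" using cis_quad[OF t2] by (simp add: e_def)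
    also have "\<dots> = complex_of_real t * e ^ (n + 1)" by (simp add: algebra_simps)
    finally show ?thesis .
  qed
  define \<psi> where "\<psi> n = (if N \<le> n \<and> n < N + L then e ^ n else 0)" for n
  define M where "M = N + L + 1"
  have \<psi>in: "N \<le> n \<Longrightarrow> n < N + L \<Longrightarrow> \<psi> n = e ^ n" for n by (simp add: \<psi>_def)
  have \<psi>out: "\<not> (N \<le> n \<and> n < N + L) \<Longrightarrow> \<psi> n = 0" for n unfolding \<psi>_def by argo
  define h where "h n = Jop a' \<psi> n - complex_of_real t * \<psi> n" for n
  have \<psi>b: "cmod (\<psi> n) \<le> 1" for n by (simp add: \<psi>_def e1)
  have h0: "h 0 = 0" by (simp add: h_def Jop_def \<psi>_def N_def)
  have hb: "cmod (h n) \<le> 4" for n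
  proof (cases "n = 0")
    case True then show ?thesis by (simp add: h0)
  next
    case False
    then have "h n = \<psi> (n - 1) + \<psi> (n + 1) - complex_of_real t * \<psi> n" by (simp add: h_def Jop_def)
    also have "cmod \<dots> \<le> cmod (\<psi> (n - 1)) + cmod (\<psi> (n + 1)) + \<bar>t\<bar> * cmod (\<psi> n)"
    proof -
      have "cmod (\<psi> (n - 1) + \<psi> (n + 1) - complex_of_real t * \<psi> n) \<le> cmod (\<psi> (n - 1) + \<psi> (n + 1)) + cmod (complex_of_real t * \<psi> n)"
        by (rule norm_triangle_ineq4)
      moreover have "cmod (\<psi> (n - 1) + \<psi> (n + 1)) \<le> cmod (\<psi> (n - 1)) + cmod (\<psi> (n + 1))"
        by (rule norm_triangle_ineq)
      moreover have "cmod (complex_of_real t * \<psi> n) = \<bar>t\<bar> * cmod (\<psi> n)" by (simp add: norm_mult)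
      ultimately show ?thesis by linarith
    qed
    also have "\<dots> \<le> 1 + 1 + 2 * 1"
      by (intro add_mono mult_mono \<psi>b t2) auto
    finally show ?thesis by simp
  qed
  define B where "B = set [N - 1, N, N + L - 1, N + L]"
  have hz: "n \<notin> B \<Longrightarrow> h n = 0" for n
  proof -
    assume nB: "n \<notin> B"
    have ne: "n \<noteq> N - 1" "n \<noteq> N" "n \<noteq> N + L - 1" "n \<noteq> N + L" using nB by (auto simp: B_def)
    have "n + 1 < N \<or> (N < n \<and> n + 1 < N + L) \<or> N + L < n" using ne L2 by presburger
    then consider "n + 1 < N" | "N < n \<and> n + 1 < N + L" | "N + L < n" by blast
    then show "h n = 0"
    proof cases
      case 1
      then show ?thesis
      proof (cases "n = 0")
        case True then show ?thesis by (simp add: h0)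
      next
        case False
        have "\<not> (N \<le> n - 1)" "\<not> (N \<le> n)" "\<not> (N \<le> n + 1)" using 1 by linarith+
        then have "\<psi> (n - 1) = 0" "\<psi> n = 0" "\<psi> (n + 1) = 0" by (simp_all only: \<psi>_def if_False conj_absorb simp_thms)
        then show ?thesis using False by (simp add: h_def Jop_def)
      qed
    next
      case 2
      then have n0: "n \<noteq> 0" "n - 1 + 2 = n + 1" "n - 1 + 1 = n" by auto
      have p1: "\<psi> (n - 1) = e ^ (n - 1)" using 2 by (intro \<psi>in) linarith+
      have p2: "\<psi> (n + 1) = e ^ (n - 1 + 2)" using 2 n0 by (subst \<psi>in) (linarith, linarith, simp)
      have p3: "\<psi> n = e ^ (n - 1 + 1)" using 2 n0 by (subst \<psi>in) (linarith, linarith, simp)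
      have "h n = e ^ (n - 1) + e ^ (n - 1 + 2) - complex_of_real t * e ^ (n - 1 + 1)"
        using n0(1) unfolding h_def Jop_def p1 p2 p3 by simp
      then show ?thesis using eq[of "n - 1"] by simp
    next
      case 3
      then have "\<psi> (n - 1) = 0" "\<psi> n = 0" "\<psi> (n + 1) = 0" by (intro \<psi>out; linarith)+
      moreover have "n \<noteq> 0" using 3 by simp
      ultimately show ?thesis by (simp add: h_def Jop_def)
    qed
  qed
  define g where "g n = Hop a' v \<psi> n - complex_of_real t * \<psi> n" for n
  have gh: "g n = h n + v n * \<psi> n" for n by (simp add: g_def h_def Hop_def)
  have \<psi>z: "M \<le> n \<Longrightarrow> \<psi> n = 0" for n by (simp add: \<psi>_def M_def)
  have gz: "M \<le> n \<Longrightarrow> g n = 0" for n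
  proof -
    assume "M \<le> n"
    then have "n \<notin> B" unfolding B_def M_def by auto
    then show "g n = 0" unfolding gh using hz \<psi>z \<open>M \<le> n\<close> by simp
  qed
  have vpz: "M \<le> n \<Longrightarrow> v n * \<psi> n = 0" for n using \<psi>z by simp
  have inH: "\<psi> \<in> Hdom a' v"
    unfolding Hdom_def using finite_supp_l2(1)[of M \<psi>, OF \<psi>z] finite_supp_l2(1)[of M "\<lambda>n. v n * \<psi> n", OF vpz]
    by simp
  have n\<psi>: "l2norm \<psi> = sqrt (real L)"
  proof -
    have "(\<Sum>n<M. (cmod (\<psi> n))\<^sup>2) = (\<Sum>n<M. if n \<in> {N..<N + L} then 1 else 0)"
      by (rule sum.cong) (auto simp: \<psi>_def e1)
    also have "\<dots> = real (card {n \<in> {..<M}. n \<in> {N..<N + L}})"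
      by (simp add: sum.inter_filter[symmetric])
    also have "{n \<in> {..<M}. n \<in> {N..<N + L}} = {N..<N + L}" by (auto simp: M_def)
    finally show ?thesis using finite_supp_l2(2)[of M \<psi>, OF \<psi>z] by simp
  qed
  have gsq: "(cmod (g n))\<^sup>2 \<le> 2 * (if n \<in> B then 16 else 0) + 2 * (if n \<in> {N..<N + L} then \<epsilon>\<^sup>2 else 0)" for n
  proof -
    have h2: "(cmod (h n))\<^sup>2 \<le> (if n \<in> B then 16 else 0)"
    proof (cases "n \<in> B")
      case True
      have "(cmod (h n))\<^sup>2 \<le> 4\<^sup>2" by (rule power_mono[OF hb]) simp
      then show ?thesis using True by simp
    next
      case False then show ?thesis by (simp add: hz)
    qed
    have v2: "(cmod (v n * \<psi> n))\<^sup>2 \<le> (if n \<in> {N..<N + L} then \<epsilon>\<^sup>2 else 0)"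
    proof (cases "n \<in> {N..<N + L}")
      case True
      then have "N0 \<le> n" by (simp add: N_def)
      then have "cmod (v n) < \<epsilon>" by (rule N0)
      then have "cmod (v n * \<psi> n) \<le> \<epsilon>" using True by (simp add: \<psi>_def norm_mult e1)
      then have "(cmod (v n * \<psi> n))\<^sup>2 \<le> \<epsilon>\<^sup>2" by (rule power_mono) simp
      then show ?thesis using True by simp
    next
      case False then have "\<psi> n = 0" by (intro \<psi>out) simp
      then show ?thesis using False by simp
    qed
    have "cmod (g n) \<le> cmod (h n) + cmod (v n * \<psi> n)" unfolding gh by (rule norm_triangle_ineq)
    then have "(cmod (g n))\<^sup>2 \<le> (cmod (h n) + cmod (v n * \<psi> n))\<^sup>2" by (rule power_mono) simp
    also have "\<dots> \<le> 2 * (cmod (h n))\<^sup>2 + 2 * (cmod (v n * \<psi> n))\<^sup>2"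
      using power2_sum[of "cmod (h n)" "cmod (v n * \<psi> n)"] power2_diff[of "cmod (h n)" "cmod (v n * \<psi> n)"]
        zero_le_power2[of "cmod (h n) - cmod (v n * \<psi> n)"] by linarith
    finally show ?thesis using h2 v2 by linarith
  qed
  have sumg: "(\<Sum>n<M. (cmod (g n))\<^sup>2) \<le> 128 + 2 * \<epsilon>\<^sup>2 * real L"
  proof -
    have "(\<Sum>n<M. (cmod (g n))\<^sup>2) \<le> (\<Sum>n<M. 2 * (if n \<in> B then 16 else 0) + 2 * (if n \<in> {N..<N + L} then \<epsilon>\<^sup>2 else 0))"
      by (rule sum_mono) (rule gsq)
    also have "\<dots> = 2 * (\<Sum>n<M. (if n \<in> B then 16 else 0)) + 2 * (\<Sum>n<M. (if n \<in> {N..<N + L} then \<epsilon>\<^sup>2 else 0))"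
      by (simp add: sum.distrib sum_distrib_left)
    also have "(\<Sum>n<M. (if n \<in> B then 16 else 0)) = 16 * real (card {n \<in> {..<M}. n \<in> B})"
      by (simp add: sum.inter_filter[symmetric])
    also have "(\<Sum>n<M. (if n \<in> {N..<N + L} then \<epsilon>\<^sup>2 else 0)) = \<epsilon>\<^sup>2 * real (card {n \<in> {..<M}. n \<in> {N..<N + L}})"
      by (simp add: sum.inter_filter[symmetric])
    also have "{n \<in> {..<M}. n \<in> {N..<N + L}} = {N..<N + L}" by (auto simp: M_def)
    also have "card {n \<in> {..<M}. n \<in> B} \<le> 4"
    proof -
      have "card {n \<in> {..<M}. n \<in> B} \<le> card B" by (rule card_mono) (auto simp: B_def)
      also have "card B \<le> 4" unfolding B_def using card_length[of "[N - 1, N, N + L - 1, N + L]"] by simp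
      finally show ?thesis .
    qed
    then have "16 * real (card {n \<in> {..<M}. n \<in> B}) \<le> 64" by simp
    ultimately show ?thesis by simp
  qed
  have ng: "l2norm g \<le> sqrt (128 + 2 * \<epsilon>\<^sup>2 * real L)"
    using finite_supp_l2(2)[of M g, OF gz] sumg by simp
  have ng0: "0 \<le> l2norm g" using finite_supp_l2(2)[of M g, OF gz] by (simp add: sum_nonneg)
  have "C * l2norm g \<le> C' * l2norm g" using ng0 by (intro mult_right_mono) (auto simp: C'_def)
  also have "\<dots> \<le> C' * sqrt (128 + 2 * \<epsilon>\<^sup>2 * real L)" using ng C'1 by (intro mult_left_mono) auto
  also have "\<dots> = sqrt (C'\<^sup>2 * (128 + 2 * \<epsilon>\<^sup>2 * real L))" using C'1 by (simp add: real_sqrt_mult)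
  also have "C'\<^sup>2 * (128 + 2 * \<epsilon>\<^sup>2 * real L) = 128 * C'\<^sup>2 + real L / 2"
    using C'1 by (simp add: \<epsilon>_def power2_eq_square field_simps)
  also have "sqrt (128 * C'\<^sup>2 + real L / 2) < sqrt (real L)"
    using Lbig by (intro real_sqrt_less_mono) simp
  finally have fin: "C * l2norm g < sqrt (real L)" .
  show ?thesis
  proof (rule bexI[OF _ inH])
    show "C * l2norm (\<lambda>n. Hop a' v \<psi> n - complex_of_real t * \<psi> n) < l2norm \<psi>"
      using fin unfolding n\<psi> g_def .
  qed
qed


lemma interval_in_spectrum:
  fixes t :: real
  assumes t2: "\<bar>t\<bar> \<le> 2" and v0: "v \<longlonglongrightarrow> 0"
  shows "complex_of_real t \<in> spectrum_H a' v"
proof -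
  have "complex_of_real t \<notin> resolvent_set a' v"
  proof
    assume "complex_of_real t \<in> resolvent_set a' v"
    then obtain C where C: "\<forall>\<psi>\<in>Hdom a' v. l2norm \<psi> \<le> C * l2norm (\<lambda>n. Hop a' v \<psi> n - complex_of_real t * \<psi> n)"
      unfolding resolvent_set_def by blast
    obtain \<psi> where "\<psi> \<in> Hdom a' v" "C * l2norm (\<lambda>n. Hop a' v \<psi> n - complex_of_real t * \<psi> n) < l2norm \<psi>"
      using weyl[OF t2 v0] by blast
    with C show False by force
  qed
  then show ?thesis by (simp add: spectrum_H_def)
qed

lemma interval_limpt:
  fixes t :: real
  assumes t2: "\<bar>t\<bar> \<le> 2" and v0: "v \<longlonglongrightarrow> 0"
  shows "complex_of_real t islimpt spectrum_H a' v"
  unfolding islimpt_approachable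
proof (intro allI impI)
  fix \<epsilon> :: real assume e: "0 < \<epsilon>"
  define d where "d = min (\<epsilon> / 2) 1"
  have d0: "0 < d" "d < \<epsilon>" "d \<le> 1" using e by (auto simp: d_def)
  define s where "s = (if t \<le> 0 then t + d else t - d)"
  have s2: "\<bar>s\<bar> \<le> 2" using t2 d0 by (auto simp: s_def)
  have ds: "\<bar>s - t\<bar> = d" using d0 by (auto simp: s_def)
  show "\<exists>x'\<in>spectrum_H a' v. x' \<noteq> complex_of_real t \<and> dist x' (complex_of_real t) < \<epsilon>"
  proof (intro bexI conjI)
    show "complex_of_real s \<in> spectrum_H a' v" by (rule interval_in_spectrum[OF s2 v0])
    show "complex_of_real s \<noteq> complex_of_real t" using ds d0 by auto
    show "dist (complex_of_real s) (complex_of_real t) < \<epsilon>"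
      using ds d0 by (simp add: dist_norm flip: of_real_diff)
  qed
qed



lemma exists_k:
  fixes z :: complex
  assumes nz: "\<And>t. \<bar>t\<bar> \<le> 2 \<Longrightarrow> z \<noteq> complex_of_real t"
  shows "\<exists>k. k \<noteq> 0 \<and> cmod k < 1 \<and> z = k + inverse k"
proof -
  define s where "s = csqrt (z\<^sup>2 - 4)"
  define k1 where "k1 = (z + s) / 2"
  define k2 where "k2 = (z - s) / 2"
  have prod: "k1 * k2 = 1"
  proof -
    have "k1 * k2 = (z\<^sup>2 - s\<^sup>2) / 4" by (simp add: k1_def k2_def power2_eq_square algebra_simps)
    also have "s\<^sup>2 = z\<^sup>2 - 4" by (simp add: s_def)
    finally show ?thesis by simp
  qed
  have k10: "k1 \<noteq> 0" using prod by auto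
  have k2i: "k2 = inverse k1" using prod k10 by (simp add: field_simps)
  have sum: "z = k1 + k2" by (simp add: k1_def k2_def field_simps)
  consider "cmod k1 < 1" | "cmod k1 > 1" | "cmod k1 = 1" by linarith
  then show ?thesis
  proof cases
    case 1 then show ?thesis using k10 sum k2i by blast
  next
    case 2
    have "cmod k2 < 1" using 2 k2i by (simp add: norm_inverse inverse_less_1_iff)
    moreover have "k2 \<noteq> 0" using k2i k10 by simp
    moreover have "z = k2 + inverse k2" using sum k2i by simp
    ultimately show ?thesis by blast
  next
    case 3
    have "k1 * cnj k1 = 1"
      using complex_norm_square[of k1] 3 by simp
    then have "inverse k1 = cnj k1" using k10 by (simp add: field_simps)
    then have "z = complex_of_real (2 * Re k1)" using sum k2i by (simp add: complex_eq_iff)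
    moreover have "\<bar>2 * Re k1\<bar> \<le> 2" using abs_Re_le_cmod[of k1] 3 by simp
    ultimately show ?thesis using nz by blast
  qed
qed

fun th :: "complex \<Rightarrow> complex \<Rightarrow> nat \<Rightarrow> complex" where
  "th z b 0 = 1"
| "th z b (Suc 0) = z - b"
| "th z b (Suc (Suc n)) = z * th z b (Suc n) - th z b n"

definition EE :: "complex \<Rightarrow> complex \<Rightarrow> nat \<Rightarrow> complex" where
  "EE k b j = (\<Sum>i<j. k ^ (2 * i)) * (1 - b * k) + k ^ (2 * j)"

lemma th_closed:
  assumes k0: "k \<noteq> 0" and zk: "z = k + inverse k"
  shows "k ^ j * th z b j = EE k b j"
proof -
  have kz: "k * z = k\<^sup>2 + 1" using k0 by (simp add: zk field_simps power2_eq_square)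
  have "k ^ j * th z b j = EE k b j \<and> k ^ Suc j * th z b (Suc j) = EE k b (Suc j)"
  proof (induction j)
    case 0
    have "k * (z - b) = k\<^sup>2 + 1 - b * k" using kz by (simp add: algebra_simps)
    then show ?case by (simp add: EE_def algebra_simps power2_eq_square)
  next
    case (Suc j)
    define G where "G = (\<Sum>i<j. k ^ (2 * i))"
    have E0: "EE k b j = G * (1 - b * k) + k ^ (2 * j)" by (simp add: EE_def G_def)
    have E1: "EE k b (Suc j) = (G + k ^ (2 * j)) * (1 - b * k) + k ^ (2 * j) * k\<^sup>2"
      by (simp add: EE_def G_def power_add power2_eq_square mult.assoc)
    have E2: "EE k b (Suc (Suc j)) = (G + k ^ (2 * j) + k ^ (2 * j) * k\<^sup>2) * (1 - b * k) + k ^ (2 * j) * k\<^sup>2 * k\<^sup>2"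
      by (simp add: EE_def G_def power_add power2_eq_square mult.assoc)
    have "k ^ Suc (Suc j) * th z b (Suc (Suc j)) = (k * z) * (k ^ Suc j * th z b (Suc j)) - k\<^sup>2 * (k ^ j * th z b j)"
      by (simp add: power2_eq_square algebra_simps)
    also have "\<dots> = (k\<^sup>2 + 1) * EE k b (Suc j) - k\<^sup>2 * EE k b j" using Suc kz by simp
    also have "\<dots> = EE k b (Suc (Suc j))" unfolding E0 E1 E2 by (simp add: algebra_simps)
    finally show ?case using Suc by simp
  qed
  then show ?thesis by simp
qed

lemma EE_bound:
  assumes k1: "cmod k < 1"
  shows "cmod (EE k b j) \<le> real j * cmod (1 - b * k) + cmod k ^ (2 * j)"
proof -
  have "cmod (\<Sum>i<j. k ^ (2 * i)) \<le> (\<Sum>i<j. cmod (k ^ (2 * i)))" by (rule norm_sum)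
  also have "\<dots> \<le> (\<Sum>i<j. 1)"
    by (intro sum_mono) (simp add: norm_power power_le_one k1 less_imp_le)
  finally have g: "cmod (\<Sum>i<j. k ^ (2 * i)) \<le> real j" by simp
  have "cmod (EE k b j) \<le> cmod (\<Sum>i<j. k ^ (2 * i)) * cmod (1 - b * k) + cmod k ^ (2 * j)"
    unfolding EE_def by (metis norm_mult norm_power norm_triangle_ineq)
  also have "\<dots> \<le> real j * cmod (1 - b * k) + cmod k ^ (2 * j)"
    by (intro add_mono mult_right_mono g) auto
  finally show ?thesis .
qed

definition hh :: "complex \<Rightarrow> real \<Rightarrow> nat \<Rightarrow> real" where
  "hh k a j = cmod k * cmod (EE k (complex_of_real a) j) / cmod (1 - complex_of_real a * k)"

lemma one_minus_ak:
  assumes a0: "0 \<le> a" and a1: "a < 1" and k1: "cmod k < 1"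
  shows "1 - a \<le> cmod (1 - complex_of_real a * k)"
proof -
  have "cmod (complex_of_real a * k) = a * cmod k" using a0 by (simp add: norm_mult)
  also have "\<dots> \<le> a * 1" using a0 k1 by (intro mult_left_mono) auto
  finally have "cmod (complex_of_real a * k) \<le> a" by simp
  moreover have "1 - cmod (complex_of_real a * k) \<le> cmod (1 - complex_of_real a * k)"
    using norm_triangle_ineq2[of 1 "complex_of_real a * k"] by simp
  ultimately show ?thesis by linarith
qed

lemma hh_less:
  assumes a0: "0 \<le> a" and a1: "a < 1" and k1: "cmod k < 1"
  shows "hh k a j < cc a + real j" "0 \<le> hh k a j"
proof -
  let ?d = "cmod (1 - complex_of_real a * k)"
  have d: "1 - a \<le> ?d" by (rule one_minus_ak[OF a0 a1 k1])
  have dpos: "0 < ?d" using d a1 by linarith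
  have "cmod k * cmod (EE k (complex_of_real a) j) \<le> cmod k * (real j * ?d + cmod k ^ (2 * j))"
    by (intro mult_left_mono EE_bound k1) simp
  also have "\<dots> = cmod k * real j * ?d + cmod k ^ (2 * j + 1)" by (simp add: algebra_simps)
  finally have 1: "hh k a j \<le> (cmod k * real j * ?d + cmod k ^ (2 * j + 1)) / ?d"
    unfolding hh_def using dpos by (simp add: divide_right_mono)
  have 2: "(cmod k * real j * ?d + cmod k ^ (2 * j + 1)) / ?d = cmod k * real j + cmod k ^ (2 * j + 1) / ?d"
    using dpos by (simp add: field_simps)
  have 3: "cmod k * real j \<le> real j" using k1 by (simp add: mult_left_le_one_le)
  have 4: "cmod k ^ (2 * j + 1) < 1"
  proof -
    have p: "cmod k ^ (2 * j) \<le> 1" by (rule power_le_one) (use k1 in auto)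
    have "cmod k ^ (2 * j + 1) = cmod k * cmod k ^ (2 * j)" by simp
    also have "\<dots> \<le> cmod k * 1" by (rule mult_left_mono[OF p]) simp
    also have "\<dots> < 1" using k1 by simp
    finally show ?thesis .
  qed
  have 5: "cmod k ^ (2 * j + 1) / ?d < 1 / (1 - a)"
  proof -
    have "cmod k ^ (2 * j + 1) / ?d \<le> cmod k ^ (2 * j + 1) / (1 - a)"
      using d a1 dpos by (intro divide_left_mono) auto
    also have "\<dots> < 1 / (1 - a)" using 4 a1 by (intro divide_strict_right_mono) auto
    finally show ?thesis .
  qed
  show "hh k a j < cc a + real j" using 1 2 3 5 unfolding cc_def by linarith
  show "0 \<le> hh k a j" unfolding hh_def using dpos by simp
qed



lemma repr:
  fixes a :: real and k z :: complex
  assumes k0: "k \<noteq> 0" and k1: "cmod k < 1" and zk: "z = k + inverse k"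
    and \<psi>0: "\<psi> \<longlonglongrightarrow> 0"
    and fdef: "\<And>n. f n = Jop (complex_of_real a) \<psi> n - z * \<psi> n"
    and f0: "f \<longlonglongrightarrow> 0"
  shows "summable (\<lambda>n. k ^ n * f n)"
    "\<psi> N * (complex_of_real a - inverse k) =
       k ^ N * (\<Sum>n\<le>N. th z (complex_of_real a) n * f n)
       + th z (complex_of_real a) N * (\<Sum>i. k ^ (i + Suc N) * f (i + Suc N))"
proof -
  let ?b = "complex_of_real a"
  let ?t = "th z ?b"
  have kpow: "k ^ Suc n * z = k ^ Suc (Suc n) + k ^ n" for n
    using k0 by (simp add: zk field_simps)
  have fS: "f (Suc n) = \<psi> n + \<psi> (Suc (Suc n)) - z * \<psi> (Suc n)" for n
    by (simp add: fdef Jop_def)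
  have f00: "f 0 = ?b * \<psi> 0 + \<psi> 1 - z * \<psi> 0" by (simp add: fdef Jop_def)
  have W\<theta>: "?t N * \<psi> (Suc N) - ?t (Suc N) * \<psi> N = (\<Sum>n\<le>N. ?t n * f n)" for N
  proof (induction N)
    case 0 then show ?case by (simp add: f00 algebra_simps)
  next
    case (Suc N)
    have "?t (Suc N) * \<psi> (Suc (Suc N)) - ?t (Suc (Suc N)) * \<psi> (Suc N)
        = (?t N * \<psi> (Suc N) - ?t (Suc N) * \<psi> N) + ?t (Suc N) * f (Suc N)"
      by (simp add: fS algebra_simps)
    then show ?case using Suc by simp
  qed
  have W\<phi>: "k ^ N * \<psi> (Suc N) - k ^ Suc N * \<psi> N = (inverse k - ?b) * \<psi> 0 + (\<Sum>n\<le>N. k ^ n * f n)" for N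
  proof (induction N)
    case 0 then show ?case using k0 by (simp add: f00 zk algebra_simps)
  next
    case (Suc N)
    have "k ^ Suc N * \<psi> (Suc (Suc N)) - k ^ Suc (Suc N) * \<psi> (Suc N)
        = (k ^ N * \<psi> (Suc N) - k ^ Suc N * \<psi> N) + k ^ Suc N * f (Suc N)"
      unfolding fS zk using k0 by (simp add: field_simps)
    then show ?case using Suc by simp
  qed
  let ?g = "\<lambda>n. k ^ n * f n"
  obtain no where no: "\<And>n. no \<le> n \<Longrightarrow> cmod (f n) < 1"
    using f0 unfolding LIMSEQ_iff by (metis diff_zero zero_less_one)
  show sg: "summable ?g"
  proof (rule summable_comparison_test'[of "\<lambda>n. cmod k ^ n" no])
    show "summable (\<lambda>n. cmod k ^ n)" using k1 by (simp add: summable_geometric)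
    fix n assume "no \<le> n"
    then have "cmod (f n) \<le> 1" using no by (simp add: less_imp_le)
    then show "norm (k ^ n * f n) \<le> cmod k ^ n"
      by (simp add: norm_mult norm_power mult_left_le)
  qed
  have D: "(inverse k - ?b) * \<psi> 0 + suminf ?g = 0"
  proof -
    have L1: "(\<lambda>N. (inverse k - ?b) * \<psi> 0 + (\<Sum>n<Suc N. ?g n)) \<longlonglongrightarrow> (inverse k - ?b) * \<psi> 0 + suminf ?g"
      by (intro tendsto_add tendsto_const LIMSEQ_Suc[OF summable_LIMSEQ[OF sg]])
    have kp: "(\<lambda>N. k ^ N) \<longlonglongrightarrow> 0" using k1 by (rule LIMSEQ_power_zero)
    have L2: "(\<lambda>N. k ^ N * \<psi> (Suc N) - k ^ Suc N * \<psi> N) \<longlonglongrightarrow> 0 * 0 - 0 * 0"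
      by (intro tendsto_diff tendsto_mult kp \<psi>0 LIMSEQ_Suc[OF kp] LIMSEQ_Suc[OF \<psi>0])
    have "(\<lambda>N. (inverse k - ?b) * \<psi> 0 + (\<Sum>n<Suc N. ?g n)) \<longlonglongrightarrow> 0"
      using L2 unfolding W\<phi> lessThan_Suc_atMost by simp
    then show ?thesis using L1 LIMSEQ_unique by blast
  qed
  have W\<phi>': "k ^ N * \<psi> (Suc N) - k ^ Suc N * \<psi> N = - (\<Sum>i. k ^ (i + Suc N) * f (i + Suc N))"
  proof -
    have "suminf ?g = (\<Sum>i. ?g (i + Suc N)) + sum ?g {..<Suc N}"
      by (rule suminf_split_initial_segment[OF sg])
    then show ?thesis unfolding W\<phi> using D lessThan_Suc_atMost[of N]
      by (simp add: algebra_simps)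
  qed
  have Cst: "?t N * k ^ Suc N - ?t (Suc N) * k ^ N = ?b - inverse k" for N
  proof (induction N)
    case 0 then show ?case by (simp add: zk)
  next
    case (Suc N)
    have "?t (Suc N) * k ^ Suc (Suc N) - ?t (Suc (Suc N)) * k ^ Suc N
        = ?t N * k ^ Suc N - ?t (Suc N) * (k ^ Suc N * z - k ^ Suc (Suc N))"
      by (simp add: algebra_simps)
    also have "k ^ Suc N * z - k ^ Suc (Suc N) = k ^ N" using kpow[of N] by simp
    finally show ?case using Suc by simp
  qed
  have "\<psi> N * (?t N * k ^ Suc N - ?t (Suc N) * k ^ N)
      = k ^ N * (?t N * \<psi> (Suc N) - ?t (Suc N) * \<psi> N) - ?t N * (k ^ N * \<psi> (Suc N) - k ^ Suc N * \<psi> N)"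
    by (simp add: algebra_simps)
  then show "\<psi> N * (?b - inverse k) = k ^ N * (\<Sum>n\<le>N. ?t n * f n) + ?t N * (\<Sum>i. k ^ (i + Suc N) * f (i + Suc N))"
    unfolding Cst W\<theta> W\<phi>' by simp
qed



lemma pt_bound:
  fixes a :: real and k z :: complex
  assumes k0: "k \<noteq> 0" and k1: "cmod k < 1" and zk: "z = k + inverse k"
    and a0: "0 \<le> a" and a1: "a < 1"
    and \<psi>0: "\<psi> \<longlonglongrightarrow> 0"
    and fdef: "\<And>n. f n = Jop (complex_of_real a) \<psi> n - z * \<psi> n"
    and f0: "f \<longlonglongrightarrow> 0"
    and sf: "summable (\<lambda>n. cmod (f n))"
  shows "cmod (\<psi> N) \<le> (\<Sum>n\<le>N. hh k a n * cmod (f n)) + hh k a N * (\<Sum>i. cmod (f (i + Suc N)))"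
proof -
  let ?b = "complex_of_real a"
  let ?t = "th z ?b"
  let ?d = "cmod (1 - ?b * k)"
  have d: "1 - a \<le> ?d" by (rule one_minus_ak[OF a0 a1 k1])
  have dpos: "0 < ?d" using d a1 by linarith
  note R = repr[OF k0 k1 zk \<psi>0 fdef f0]
  define S1 where "S1 = (\<Sum>n\<le>N. ?t n * f n)"
  define S2 where "S2 = (\<Sum>i. k ^ (i + Suc N) * f (i + Suc N))"
  have eq: "\<psi> N * (1 - ?b * k) = - (k ^ Suc N * S1 + k * ?t N * S2)"
  proof -
    have "\<psi> N * (1 - ?b * k) = - k * (\<psi> N * (?b - inverse k))" using k0 by (simp add: field_simps)
    also have "\<dots> = - k * (k ^ N * S1 + ?t N * S2)" using R(2)[of N] by (simp add: S1_def S2_def)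
    also have "\<dots> = - (k ^ Suc N * S1 + k * ?t N * S2)" by (simp add: algebra_simps)
    finally show ?thesis .
  qed
  have sfs: "summable (\<lambda>i. cmod (f (i + Suc N)))" using sf by (rule summable_ignore_initial_segment)
  have EEk: "cmod (k ^ n) * cmod (?t n) = cmod (EE k ?b n)" for n
    using th_closed[OF k0 zk, of n ?b] by (metis norm_mult)
  have kle: "cmod k ^ m \<le> 1" for m by (rule power_le_one) (use k1 in auto)
  have b1: "cmod (k ^ Suc N * S1) \<le> ?d * (\<Sum>n\<le>N. hh k a n * cmod (f n))"
  proof -
    have "cmod (k ^ Suc N * S1) \<le> (\<Sum>n\<le>N. cmod (k ^ Suc N * ?t n * f n))"
      unfolding S1_def sum_distrib_left by (metis (no_types, lifting) mult.assoc norm_sum sum.cong)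
    also have "\<dots> \<le> (\<Sum>n\<le>N. cmod k * cmod (EE k ?b n) * cmod (f n))"
    proof (rule sum_mono)
      fix n assume "n \<in> {..N}"
      then have nN: "n \<le> N" by simp
      have "cmod (k ^ Suc N * ?t n * f n) = cmod k * cmod k ^ (N - n) * (cmod (k ^ n) * cmod (?t n)) * cmod (f n)"
      proof -
        have "Suc N = 1 + (N - n) + n" using nN by simp
        then have "cmod k ^ Suc N = cmod k * cmod k ^ (N - n) * cmod k ^ n"
          by (metis power_add power_one_right)
        then show ?thesis apply (simp add: norm_mult norm_power) by blast
      qed
      also have "\<dots> \<le> cmod k * 1 * (cmod (k ^ n) * cmod (?t n)) * cmod (f n)"
        by (intro mult_right_mono mult_left_mono kle) auto
      finally show "cmod (k ^ Suc N * ?t n * f n) \<le> cmod k * cmod (EE k ?b n) * cmod (f n)"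
        unfolding EEk by simp
    qed
    also have "\<dots> = ?d * (\<Sum>n\<le>N. hh k a n * cmod (f n))"
      unfolding sum_distrib_left hh_def using dpos by (intro sum.cong) (simp_all add: field_simps)
    finally show ?thesis .
  qed
  have b2: "cmod (k * ?t N * S2) \<le> ?d * (hh k a N * (\<Sum>i. cmod (f (i + Suc N))))"
  proof -
    have sabs: "summable (\<lambda>i. cmod (k ^ (i + Suc N) * f (i + Suc N)))"
    proof (rule summable_comparison_test'[OF sfs])
      fix i
      have "cmod (k ^ (i + Suc N) * f (i + Suc N)) = cmod k ^ (i + Suc N) * cmod (f (i + Suc N))"
        by (simp add: norm_mult norm_power)
      also have "\<dots> \<le> 1 * cmod (f (i + Suc N))" by (intro mult_right_mono kle) auto
      finally show "norm (norm (k ^ (i + Suc N) * f (i + Suc N))) \<le> cmod (f (i + Suc N))" by simp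
    qed
    have "cmod (k * ?t N * S2) = cmod k * cmod (?t N) * cmod S2" by (simp add: norm_mult)
    also have "cmod S2 \<le> (\<Sum>i. cmod (k ^ (i + Suc N) * f (i + Suc N)))"
      unfolding S2_def by (rule summable_norm[OF sabs])
    also have "(\<Sum>i. cmod (k ^ (i + Suc N) * f (i + Suc N))) = (\<Sum>i. cmod (k ^ N) * (cmod k ^ Suc i * cmod (f (i + Suc N))))"
      by (rule suminf_cong) (simp add: norm_mult norm_power power_add algebra_simps)
    also have "\<dots> = cmod (k ^ N) * (\<Sum>i. cmod k ^ Suc i * cmod (f (i + Suc N)))"
    proof (rule suminf_mult)
      show "summable (\<lambda>i. cmod k ^ Suc i * cmod (f (i + Suc N)))"
      proof (rule summable_comparison_test'[OF sfs])
        fix i show "norm (cmod k ^ Suc i * cmod (f (i + Suc N))) \<le> cmod (f (i + Suc N))"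
          using kle[of "Suc i"] by (simp add: mult_left_le_one_le abs_mult)
      qed
    qed
    also have "(\<Sum>i. cmod k ^ Suc i * cmod (f (i + Suc N))) \<le> (\<Sum>i. cmod (f (i + Suc N)))"
    proof (rule suminf_le)
      show "summable (\<lambda>i. cmod k ^ Suc i * cmod (f (i + Suc N)))"
      proof (rule summable_comparison_test'[OF sfs])
        fix i show "norm (cmod k ^ Suc i * cmod (f (i + Suc N))) \<le> cmod (f (i + Suc N))"
          using kle[of "Suc i"] by (simp add: mult_left_le_one_le abs_mult)
      qed
      show "summable (\<lambda>i. cmod (f (i + Suc N)))" by (rule sfs)
      fix i show "cmod k ^ Suc i * cmod (f (i + Suc N)) \<le> cmod (f (i + Suc N))"
        using kle[of "Suc i"] by (simp add: mult_left_le_one_le)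
    qed
    finally have "cmod (k * ?t N * S2) \<le> cmod k * cmod (?t N) * (cmod (k ^ N) * (\<Sum>i. cmod (f (i + Suc N))))"
      by (simp add: mult_left_mono)
    also have "\<dots> = cmod k * cmod (EE k ?b N) * (\<Sum>i. cmod (f (i + Suc N)))"
      using EEk[of N] by (simp add: algebra_simps)
    also have "\<dots> = ?d * (hh k a N * (\<Sum>i. cmod (f (i + Suc N))))"
      unfolding hh_def using dpos by (simp add: field_simps)
    finally show ?thesis .
  qed
  have "cmod (\<psi> N) * ?d = cmod (k ^ Suc N * S1 + k * ?t N * S2)"
    using arg_cong[OF eq, of cmod] by (simp only: norm_mult norm_minus_cancel)
  also have "\<dots> \<le> cmod (k ^ Suc N * S1) + cmod (k * ?t N * S2)" by (rule norm_triangle_ineq)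
  also have "\<dots> \<le> ?d * ((\<Sum>n\<le>N. hh k a n * cmod (f n)) + hh k a N * (\<Sum>i. cmod (f (i + Suc N))))"
    using b1 b2 by (simp add: algebra_simps)
  finally show ?thesis using dpos by (simp add: mult.commute)
qed



lemma no_eigen:
  fixes a :: real and z :: complex
  assumes M: "matrix_op_norm_le (Kmat a v) 1" and a0: "0 \<le> a" and a1: "a < 1"
    and sv: "summable (\<lambda>n. cmod (v n))"
    and nz: "\<And>t. \<bar>t\<bar> \<le> 2 \<Longrightarrow> z \<noteq> complex_of_real t"
  shows "\<not> is_eigenvalue (complex_of_real a) v z"
proof
  assume "is_eigenvalue (complex_of_real a) v z"
  then obtain \<psi> where \<psi>H: "\<psi> \<in> Hdom (complex_of_real a) v" and \<psi>ne: "\<psi> \<noteq> (\<lambda>_. 0)"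
    and eig: "Hop (complex_of_real a) v \<psi> = (\<lambda>n. z * \<psi> n)"
    unfolding is_eigenvalue_def by blast
  obtain k where k0: "k \<noteq> 0" and k1: "cmod k < 1" and zk: "z = k + inverse k"
    using exists_k[OF nz] by blast
  let ?b = "complex_of_real a"
  define f where "f n = Jop ?b \<psi> n - z * \<psi> n" for n
  have fv: "f n = - (v n * \<psi> n)" for n
  proof -
    have "Hop ?b v \<psi> n = z * \<psi> n" using eig by metis
    then show ?thesis unfolding f_def Hop_def by (simp add: algebra_simps)
  qed
  have l\<psi>: "l2 \<psi>" and lv: "l2 (\<lambda>n. v n * \<psi> n)" using \<psi>H by (auto simp: Hdom_def)
  have \<psi>0: "\<psi> \<longlonglongrightarrow> 0" by (rule l2_tendsto_zero[OF l\<psi>])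
  have f0: "f \<longlonglongrightarrow> 0"
  proof -
    have "(\<lambda>n. v n * \<psi> n) \<longlonglongrightarrow> 0" by (rule l2_tendsto_zero[OF lv])
    then have "(\<lambda>n. - (v n * \<psi> n)) \<longlonglongrightarrow> - 0" by (rule tendsto_minus)
    then show ?thesis unfolding fv[abs_def] by simp
  qed
  define u where "u n = ww v n * cmod (\<psi> n)" for n
  have u0: "0 \<le> u n" for n by (simp add: u_def ww_nonneg)
  have fu: "cmod (f n) = ww v n * u n" for n
    unfolding fv u_def by (simp add: norm_mult ww_sq'[symmetric] mult.assoc)
  have sw: "summable (\<lambda>n. (ww v n)\<^sup>2)" using sv by (simp add: ww_sq)
  have su: "summable (\<lambda>n. (u n)\<^sup>2)"
  proof -
    obtain no where no: "\<And>n. no \<le> n \<Longrightarrow> cmod (\<psi> n) < 1"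
      using \<psi>0 unfolding LIMSEQ_iff by (metis diff_zero zero_less_one)
    show ?thesis
    proof (rule summable_comparison_test'[OF sv, of no])
      fix n assume "no \<le> n"
      then have p: "cmod (\<psi> n) \<le> 1" using no less_imp_le by blast
      have "(u n)\<^sup>2 = cmod (v n) * (cmod (\<psi> n))\<^sup>2" by (simp add: u_def power_mult_distrib ww_sq)
      also have "\<dots> \<le> cmod (v n) * 1" using p by (intro mult_left_mono) (auto simp: power_le_one)
      finally show "norm ((u n)\<^sup>2) \<le> cmod (v n)" by simp
    qed
  qed
  have sf: "summable (\<lambda>n. cmod (f n))"
    using summable_sq_mult(1)[OF sw su] by (simp add: fu ww_nonneg u0)
  note KR = Kreal[OF M a1 su]
  define Ku where "Ku m = (\<Sum>n. kr a v m n * u n)" for m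
  define gap where "gap N = ww v N * (cc a + real N - hh k a N) * ww v N * u N" for N
  have hl: "hh k a n < cc a + real n" "0 \<le> hh k a n" for n using hh_less[OF a0 a1 k1] by auto
  have gap0: "0 \<le> gap N" for N
    unfolding gap_def using hl[of N] u0[of N] ww_nonneg[of v N] by simp
  have main: "u N \<le> Ku N - gap N" for N
  proof -
    have sK: "summable (\<lambda>n. kr a v N n * u n)" using KR(1) by blast
    have split: "Ku N = (\<Sum>i. kr a v N (i + Suc N) * u (i + Suc N)) + (\<Sum>n<Suc N. kr a v N n * u n)"
      unfolding Ku_def by (rule suminf_split_initial_segment[OF sK])
    have tail: "(\<Sum>i. kr a v N (i + Suc N) * u (i + Suc N)) = ww v N * (cc a + real N) * (\<Sum>i. cmod (f (i + Suc N)))"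
    proof -
      have "(\<Sum>i. kr a v N (i + Suc N) * u (i + Suc N)) = (\<Sum>i. ww v N * (cc a + real N) * cmod (f (i + Suc N)))"
        by (rule suminf_cong) (simp add: kr_def fu min_def)
      also have "\<dots> = ww v N * (cc a + real N) * (\<Sum>i. cmod (f (i + Suc N)))"
        by (rule suminf_mult) (rule summable_ignore_initial_segment[OF sf])
      finally show ?thesis .
    qed
    have head: "(\<Sum>n<Suc N. kr a v N n * u n) = (\<Sum>n\<le>N. ww v N * (cc a + real n) * cmod (f n))"
      unfolding lessThan_Suc_atMost by (rule sum.cong) (simp_all add: kr_def fu min_def)
    have Sf0: "0 \<le> (\<Sum>i. cmod (f (i + Suc N)))"
      by (rule suminf_nonneg[OF summable_ignore_initial_segment[OF sf]]) simp
    have pb: "cmod (\<psi> N) \<le> (\<Sum>n\<le>N. hh k a n * cmod (f n)) + hh k a N * (\<Sum>i. cmod (f (i + Suc N)))"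
      by (rule pt_bound[OF k0 k1 zk a0 a1 \<psi>0 f_def f0 sf])
    have uN: "u N \<le> ww v N * (\<Sum>n\<le>N. hh k a n * cmod (f n)) + ww v N * hh k a N * (\<Sum>i. cmod (f (i + Suc N)))"
      using mult_left_mono[OF pb ww_nonneg[of v N]] unfolding u_def by (simp add: algebra_simps)
    have t2: "ww v N * hh k a N * (\<Sum>i. cmod (f (i + Suc N))) \<le> ww v N * (cc a + real N) * (\<Sum>i. cmod (f (i + Suc N)))"
      using hl[of N] Sf0 ww_nonneg[of v N] by (intro mult_right_mono mult_left_mono) auto
    have t1: "ww v N * (\<Sum>n\<le>N. hh k a n * cmod (f n)) \<le> (\<Sum>n\<le>N. ww v N * (cc a + real n) * cmod (f n)) - gap N"
    proof -
      have "(\<Sum>n\<le>N. ww v N * (cc a + real n) * cmod (f n)) - ww v N * (\<Sum>n\<le>N. hh k a n * cmod (f n))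
          = (\<Sum>n\<le>N. ww v N * (cc a + real n - hh k a n) * cmod (f n))"
        by (simp add: sum_distrib_left sum_subtractf[symmetric] algebra_simps)
      also have "\<dots> \<ge> ww v N * (cc a + real N - hh k a N) * cmod (f N)"
      proof (rule member_le_sum[of N "{..N}" "\<lambda>n. ww v N * (cc a + real n - hh k a n) * cmod (f n)"])
        fix n assume "n \<in> {..N} - {N}"
        show "0 \<le> ww v N * (cc a + real n - hh k a n) * cmod (f n)"
          using hl[of n] ww_nonneg[of v N] by simp
      qed auto
      also have "ww v N * (cc a + real N - hh k a N) * cmod (f N) = gap N"
        by (simp add: gap_def fu algebra_simps)
      finally show ?thesis by linarith
    qed
    show ?thesis using uN t1 t2 split tail head by linarith
  qed
  have sKu: "summable (\<lambda>m. (Ku m)\<^sup>2)" using KR(2) by (simp add: Ku_def)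
  have Kub: "(\<Sum>m. (Ku m)\<^sup>2) \<le> (\<Sum>n. (u n)\<^sup>2)" using KR(3) by (simp add: Ku_def)
  have suK: "summable (\<lambda>n. u n * Ku n)" by (rule summable_sq_mult(2)[OF su sKu])
  have ug: "0 \<le> u n * gap n" "u n * gap n \<le> u n * Ku n - (u n)\<^sup>2" for n
  proof -
    show "0 \<le> u n * gap n" using u0 gap0 by simp
    have "u n * u n \<le> u n * (Ku n - gap n)" using main[of n] u0[of n] by (rule mult_left_mono)
    then show "u n * gap n \<le> u n * Ku n - (u n)\<^sup>2" by (simp add: power2_eq_square algebra_simps)
  qed
  have sdiff: "summable (\<lambda>n. u n * Ku n - (u n)\<^sup>2)" by (rule summable_diff[OF suK su])
  have sug: "summable (\<lambda>n. u n * gap n)"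
    by (rule summable_comparison_test'[OF sdiff]) (use ug in simp)
  have "(\<Sum>n. u n * gap n) \<le> (\<Sum>n. u n * Ku n - (u n)\<^sup>2)"
    by (rule suminf_le[OF _ sug sdiff]) (rule ug(2))
  also have "\<dots> = (\<Sum>n. u n * Ku n) - (\<Sum>n. (u n)\<^sup>2)" by (rule suminf_diff[OF suK su, symmetric])
  also have "(\<Sum>n. u n * Ku n) \<le> (\<Sum>n. (u n)\<^sup>2)"
  proof -
    have "(\<Sum>n. u n * Ku n) \<le> sqrt (\<Sum>n. (u n)\<^sup>2) * sqrt (\<Sum>n. (Ku n)\<^sup>2)"
      using CS_series[OF su sKu] by linarith
    also have "\<dots> \<le> sqrt (\<Sum>n. (u n)\<^sup>2) * sqrt (\<Sum>n. (u n)\<^sup>2)"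
      using Kub suminf_nonneg[OF su] by (intro mult_left_mono) auto
    also have "\<dots> = (\<Sum>n. (u n)\<^sup>2)" using suminf_nonneg[OF su] by simp
    finally show ?thesis .
  qed
  finally have "(\<Sum>n. u n * gap n) \<le> 0" by simp
  moreover have "0 \<le> (\<Sum>n. u n * gap n)" by (rule suminf_nonneg[OF sug ug(1)])
  ultimately have "(\<Sum>n. u n * gap n) = 0" by simp
  then have allz: "\<forall>n. u n * gap n = 0" using suminf_eq_zero_iff[OF sug ug(1)] by simp
  have fz: "f n = 0" for n
  proof -
    have "u n * gap n = (ww v n * u n)\<^sup>2 * (cc a + real n - hh k a n)"
      by (simp add: gap_def power2_eq_square algebra_simps)
    moreover have "0 < cc a + real n - hh k a n" using hl[of n] by simp
    ultimately have "ww v n * u n = 0" using allz by simp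
    then have "cmod (f n) = 0" using fu[of n] by simp
    then show ?thesis by simp
  qed
  have bk: "?b - inverse k \<noteq> 0"
  proof
    assume "?b - inverse k = 0"
    then have "cmod ?b = cmod (inverse k)" by simp
    moreover have "1 < cmod (inverse k)" using k0 k1 by (simp add: norm_inverse one_less_inverse)
    moreover have "cmod ?b < 1" using a0 a1 by simp
    ultimately show False by simp
  qed
  have "\<psi> N = 0" for N
  proof -
    have "\<psi> N * (?b - inverse k) = k ^ N * (\<Sum>n\<le>N. th z ?b n * f n) + th z ?b N * (\<Sum>i. k ^ (i + Suc N) * f (i + Suc N))"
      by (rule repr(2)[OF k0 k1 zk \<psi>0 f_def f0])
    then have "\<psi> N * (?b - inverse k) = 0" by (simp add: fz)
    then show ?thesis using bk by simp
  qed
  then show False using \<psi>ne by auto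
qed


theorem theorem5p7:
  fixes a :: real and v :: "nat \<Rightarrow> complex"
  assumes "0 \<le> a" and "a < 1"
  shows "(matrix_op_norm_le (Kmat a v) 1 \<longleftrightarrow> absV_le_negLap (complex_of_real a) v)
       \<and> (matrix_op_norm_le (Kmat a v) 1 \<longrightarrow> discrete_spectrum (complex_of_real a) v = {})"
proof (intro conjI impI)
  show "matrix_op_norm_le (Kmat a v) 1 \<longleftrightarrow> absV_le_negLap (complex_of_real a) v"
    using K_imp_absV[OF _ assms] absV_imp_K[OF _ assms(2)] by blast
next
  assume M: "matrix_op_norm_le (Kmat a v) 1"
  have V: "absV_le_negLap (complex_of_real a) v" by (rule K_imp_absV[OF M assms])
  have sv: "summable (\<lambda>n. cmod (v n))" by (rule absV_sum_v(1)[OF V assms(2)])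
  have v0: "v \<longlonglongrightarrow> 0"
  proof -
    have "(\<lambda>n. cmod (v n)) \<longlonglongrightarrow> 0" by (rule summable_LIMSEQ_zero[OF sv])
    then show ?thesis by (simp add: tendsto_norm_zero_iff)
  qed
  show "discrete_spectrum (complex_of_real a) v = {}"
  proof (rule ccontr)
    assume "discrete_spectrum (complex_of_real a) v \<noteq> {}"
    then obtain z where z: "z \<in> discrete_spectrum (complex_of_real a) v" by blast
    then have nl: "\<not> z islimpt spectrum_H (complex_of_real a) v"
      and ev: "is_eigenvalue (complex_of_real a) v z"
      unfolding discrete_spectrum_def by auto
    show False
    proof (cases "\<exists>t. \<bar>t\<bar> \<le> 2 \<and> z = complex_of_real t")
      case True
      then obtain t where "\<bar>t\<bar> \<le> 2" "z = complex_of_real t" by blast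
      then show False using interval_limpt[of t v "complex_of_real a"] v0 nl by simp
    next
      case False
      then have "\<And>t. \<bar>t\<bar> \<le> 2 \<Longrightarrow> z \<noteq> complex_of_real t" by blast
      then show False using no_eigen[OF M assms sv] ev by blast
    qed
  qed
qed


end
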